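(* Let $p$ be a prime, $n\geq 1$, $\zeta=\zeta_{p^n}$ a primitive $p^n$th root of unity, $T=\mathbb{Z}_{(p)}[\zeta]$ and $t=1-\zeta$. Consider the cyclotomic Dedekind embedding \[ \delta_{p^n}\colon T\otimes_{\mathbb{Z}_{(p)}}T\longrightarrow \prod_{i\in(\mathbb{Z}/p^n)^\ast}T,\qquad \zeta^k\otimes\zeta^l\longmapsto(\zeta^{k+il})_{i\in(\mathbb{Z}/p^n)^\ast}\quad (k,l\in[0,(p-1)p^{n-1}-1]), \] a $T$-linear injective map between free $T$-modules of rank $(p-1)p^{n-1}$ (with $T$ acting on the left tensor factor and componentwise on the product). Let $j\in[0,p^n-1]$ with $p\nmid j$, let $N(j):=\#\{i\in[0,j]: p\nmid i\}$, and write $j=\sum_{s\geq 0}a_sp^s$ with $a_s\in[0,p-1]$. Then the $N(j)$th $T$-linear elementary divisor of $\delta_{p^n}$ has $t$-adic valuation \[ -1+\sum_{s\geq 0}\bigl(a_s(s+1)-a_{s+1}(s+2)\bigr)p^s . \]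
   Context: For an injective $T$-linear map $f\colon M\to N$ between free modules of the same finite rank $r$ over a discrete valuation ring $T$ with uniformizer $t$, there are $T$-bases of $M$ and $N$ in which $f$ is diagonal with entries $t^{e_0},\dots,t^{e_{r-1}}$ (times units), $e_0\le e_1\le\dots\le e_{r-1}$; the $k$th elementary divisor is $t^{e_{k-1}}$, whose valuation is $e_{k-1}$. $\mathbb{Z}_{(p)}$ denotes the localization of $\mathbb{Z}$ at the prime ideal $(p)$. *)

theory Defs
  imports Complex_Main "HOL-Computational_Algebra.Primes" "Jordan_Normal_Form.Matrix"
begin

definition Zloc :: "nat \<Rightarrow> complex set" where
  "Zloc p = {of_int a / of_int b | a b. \<not> int p dvd b}"

text \<open>T = Z_(p)[z] for z a primitive p^n-th root of unity (so powers z^k, k < p^n, suffice).\<close>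
definition cyc_ring :: "nat \<Rightarrow> nat \<Rightarrow> complex \<Rightarrow> complex set" where
  "cyc_ring p n z = {\<Sum>k<p^n. c k * z ^ k | c. \<forall>k. c k \<in> Zloc p}"

definition mat_over :: "complex set \<Rightarrow> complex mat \<Rightarrow> bool" where
  "mat_over S A \<longleftrightarrow> (\<forall>i<dim_row A. \<forall>j<dim_col A. A $$ (i, j) \<in> S)"

definition invertible_over :: "complex set \<Rightarrow> nat \<Rightarrow> complex mat \<Rightarrow> bool" where
  "invertible_over S r U \<longleftrightarrow> U \<in> carrier_mat r r \<and> mat_over S U \<and>
     (\<exists>U'. U' \<in> carrier_mat r r \<and> mat_over S U' \<and> U * U' = 1\<^sub>m r \<and> U' * U = 1\<^sub>m r)"

definition unit_in :: "complex set \<Rightarrow> complex \<Rightarrow> bool" where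
  "unit_in S u \<longleftrightarrow> u \<in> S \<and> u \<noteq> 0 \<and> 1 / u \<in> S"

text \<open>e_0 \<le> ... \<le> e_{r-1} are the exponents of the elementary divisors of the r x r matrix A
  over the DVR S with uniformizer t: after changes of S-bases on source (V) and
  target (U), A becomes diagonal with entries (unit) * t^(e a).\<close>
definition elem_div_exps :: "complex set \<Rightarrow> complex \<Rightarrow> nat \<Rightarrow> complex mat \<Rightarrow> (nat \<Rightarrow> nat) \<Rightarrow> bool" where
  "elem_div_exps S t r A e \<longleftrightarrow>
     (\<forall>a b. a \<le> b \<longrightarrow> b < r \<longrightarrow> e a \<le> e b) \<and>
     (\<exists>U V u. invertible_over S r U \<and> invertible_over S r V \<and> (\<forall>a<r. unit_in S (u a)) \<and>
        U * A * V = mat r r (\<lambda>(a, b). if a = b then u a * t ^ e a else 0))"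

definition cyc_units :: "nat \<Rightarrow> nat \<Rightarrow> nat list" where
  "cyc_units p n = filter (\<lambda>i. \<not> p dvd i) [0..<p^n]"

text \<open>Matrix of the Dedekind embedding w.r.t. the T-basis 1 \<otimes> z^l (l < (p-1)p^(n-1)) of
  T \<otimes> T (T acting on the left factor) and the standard basis of the product indexed by
  (Z/p^n)^*: column l is the image (z^(i*l))_i of 1 \<otimes> z^l.\<close>
definition dedekind_mat :: "nat \<Rightarrow> nat \<Rightarrow> complex \<Rightarrow> complex mat" where
  "dedekind_mat p n z = mat ((p - 1) * p ^ (n - 1)) ((p - 1) * p ^ (n - 1))
     (\<lambda>(a, l). z ^ (cyc_units p n ! a * l))"

definition Ncount :: "nat \<Rightarrow> nat \<Rightarrow> nat" where
  "Ncount p j = card {i. i \<le> j \<and> \<not> p dvd i}"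

definition digit :: "nat \<Rightarrow> nat \<Rightarrow> nat \<Rightarrow> nat" where
  "digit p j s = (j div p ^ s) mod p"

end

theory Submission
  imports Defs "Jordan_Normal_Form.Determinant" "HOL-Computational_Algebra.Fundamental_Theorem_Algebra" "HOL-Number_Theory.Cong"
begin


definition Pset :: "nat \<Rightarrow> nat \<Rightarrow> nat set" where "Pset p x = {k. k < x \<and> \<not> p dvd k}"
definition Wt :: "nat \<Rightarrow> nat \<Rightarrow> nat \<Rightarrow> nat" where "Wt p x y = (\<Sum>k\<in>Pset p x. p ^ multiplicity p (y - k))"
definition cc :: "nat \<Rightarrow> nat \<Rightarrow> nat" where "cc p s = (if s = 0 then 1 else p ^ s - p ^ (s - 1))"

lemma finite_Pset[simp]: "finite (Pset p x)" unfolding Pset_def by auto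

lemma cc_sum: assumes "p \<ge> 1" shows "(\<Sum>s\<le>m. cc p s) = p ^ m"
proof (induction m)
  case 0 then show ?case by (simp add: cc_def)
next
  case (Suc m)
  have "p ^ m \<le> p ^ Suc m" using assms by simp
  then show ?case using Suc by (simp add: cc_def)
qed

lemma pow_mult_decomp:
  assumes p: "p > 1" and d: "0 < d" "d < p ^ n"
  shows "p ^ multiplicity p d = (\<Sum>s<n. if p ^ s dvd d then cc p s else 0)"
proof -
  define v where "v = multiplicity p d"
  have h: "d \<noteq> 0" "\<not> is_unit p" using d p by auto
  have iff: "p ^ s dvd d \<longleftrightarrow> s \<le> v" for s
    unfolding v_def by (rule power_dvd_iff_le_multiplicity[OF h])
  have "p ^ v dvd d" using iff by simp
  then have "p ^ v \<le> d" using d by (simp add: dvd_imp_le)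
  then have "p ^ v < p ^ n" using d by simp
  then have vn: "v < n" by (rule power_less_imp_less_exp[OF p])
  have "(\<Sum>s<n. if p ^ s dvd d then cc p s else 0) = (\<Sum>s<n. if s \<le> v then cc p s else 0)"
    using iff by simp
  also have "\<dots> = (\<Sum>s\<in>{s\<in>{..<n}. s \<le> v}. cc p s)"
    by (rule sum.inter_filter[symmetric]) simp
  also have "{s\<in>{..<n}. s \<le> v} = {..v}" using vn by auto
  also have "(\<Sum>s\<le>v. cc p s) = p ^ v" using cc_sum p by simp
  finally show ?thesis unfolding v_def by simp
qed

lemma sum_if_card: "finite A \<Longrightarrow> (\<Sum>k\<in>A. if P k then c else 0) = c * card {k\<in>A. P k}"
  by (simp add: sum.inter_filter[symmetric])

lemma Wt_decomp:
  assumes p: "p > 1" and xy: "x \<le> y" and y: "y < p ^ n"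
  shows "Wt p x y = (\<Sum>s<n. cc p s * card {k\<in>Pset p x. p ^ s dvd (y - k)})"
proof -
  have "Wt p x y = (\<Sum>k\<in>Pset p x. \<Sum>s<n. if p ^ s dvd (y - k) then cc p s else 0)"
    unfolding Wt_def
  proof (rule sum.cong[OF refl])
    fix k assume "k \<in> Pset p x"
    then have "0 < y - k" "y - k < p ^ n" using xy y unfolding Pset_def by auto
    then show "p ^ multiplicity p (y - k) = (\<Sum>s<n. if p ^ s dvd (y - k) then cc p s else 0)"
      by (rule pow_mult_decomp[OF p])
  qed
  also have "\<dots> = (\<Sum>s<n. \<Sum>k\<in>Pset p x. if p ^ s dvd (y - k) then cc p s else 0)"
    by (rule sum.swap)
  also have "\<dots> = (\<Sum>s<n. cc p s * card {k\<in>Pset p x. p ^ s dvd (y - k)})"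
    by (simp add: sum_if_card)
  finally show ?thesis .
qed

lemma count_lower:
  assumes M: "M > 0" and xy: "x \<le> y"
  shows "x div M \<le> card {k. k < x \<and> M dvd (y - k)}"
proof -
  let ?f = "\<lambda>i. y mod M + i * M"
  have inj: "inj_on ?f {..<x div M}" by (rule inj_onI) (use M in simp)
  have sub: "?f ` {..<x div M} \<subseteq> {k. k < x \<and> M dvd (y - k)}"
  proof
    fix k assume "k \<in> ?f ` {..<x div M}"
    then obtain i where i: "i < x div M" "k = ?f i" by auto
    have "y mod M < M" using M by simp
    then have "k < M + i * M" using i by simp
    also have "\<dots> = (i + 1) * M" by simp
    also have "\<dots> \<le> (x div M) * M" using i by (intro mult_le_mono1) simp
    also have "\<dots> \<le> x" by simp
    finally have kx: "k < x" .
    have "x div M \<le> y div M" using xy by (simp add: div_le_mono)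
    then have iy: "i \<le> y div M" using i by simp
    have "y = y div M * M + y mod M" by simp
    then have "y - k = y div M * M - i * M" using i by linarith
    also have "\<dots> = (y div M - i) * M" by (simp add: diff_mult_distrib)
    finally have "y - k = (y div M - i) * M" .
    then have "M dvd (y - k)" by simp
    then show "k \<in> {k. k < x \<and> M dvd (y - k)}" using kx by simp
  qed
  have "x div M = card (?f ` {..<x div M})" using card_image[OF inj] by simp
  also have "\<dots> \<le> card {k. k < x \<and> M dvd (y - k)}"
    by (rule card_mono[OF _ sub]) simp
  finally show ?thesis .
qed

lemma count_upper:
  assumes M: "M > 0"
  shows "card {k. k < x \<and> M dvd (x - k)} \<le> x div M"
proof -
  have sub: "{k. k < x \<and> M dvd (x - k)} \<subseteq> (\<lambda>j. x - j * M) ` {1..x div M}"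
  proof
    fix k assume k: "k \<in> {k. k < x \<and> M dvd (x - k)}"
    then obtain j where j: "x - k = M * j" by auto
    have "j \<ge> 1" using j k by (cases j) auto
    moreover have "j * M \<le> x" using j k by (simp add: mult.commute)
    then have "j \<le> x div M" using M by (simp add: less_eq_div_iff_mult_less_eq)
    moreover have "k = x - j * M" using j k by (simp add: mult.commute)
    ultimately show "k \<in> (\<lambda>j. x - j * M) ` {1..x div M}" by auto
  qed
  have "card {k. k < x \<and> M dvd (x - k)} \<le> card ((\<lambda>j. x - j * M) ` {1..x div M})"
    by (rule card_mono[OF _ sub]) simp
  also have "\<dots> \<le> card {1..x div M}" by (rule card_image_le) simp
  finally show ?thesis by simp
qed

lemma cnt_eq_nodvd:
  assumes p: "p > 1" and s: "s \<ge> 1" and xy: "x \<le> y" and py: "\<not> p dvd y"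
  shows "{k\<in>Pset p x. p ^ s dvd (y - k)} = {k. k < x \<and> p ^ s dvd (y - k)}"
proof -
  have "\<not> p dvd k" if k: "k < x" "p ^ s dvd (y - k)" for k
  proof
    assume pk: "p dvd k"
    have "p dvd p ^ s" using s by (simp add: dvd_power)
    then have "p dvd (y - k)" using k(2) by (rule dvd_trans)
    then have "p dvd (y - k) + k" using pk by simp
    then show False using k xy py by simp
  qed
  then show ?thesis unfolding Pset_def by auto
qed

lemma cnt_mono:
  assumes p: "p > 1" and s: "s \<ge> 1" and xy: "x \<le> y" and py: "\<not> p dvd y" and px: "\<not> p dvd x"
  shows "card {k\<in>Pset p x. p ^ s dvd (x - k)} \<le> card {k\<in>Pset p x. p ^ s dvd (y - k)}"
proof -
  have M: "p ^ s > 0" using p by simp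
  have "card {k\<in>Pset p x. p ^ s dvd (x - k)} = card {k. k < x \<and> p ^ s dvd (x - k)}"
    using cnt_eq_nodvd[OF p s le_refl px] by simp
  also have "\<dots> \<le> x div p ^ s" by (rule count_upper[OF M])
  also have "\<dots> \<le> card {k. k < x \<and> p ^ s dvd (y - k)}" by (rule count_lower[OF M xy])
  also have "\<dots> = card {k\<in>Pset p x. p ^ s dvd (y - k)}"
    using cnt_eq_nodvd[OF p s xy py] by simp
  finally show ?thesis .
qed

lemma cnt_exact:
  assumes p: "p > 1" and s: "s \<ge> 1" and px: "\<not> p dvd x"
  shows "card {k\<in>Pset p x. p ^ s dvd (x - k)} = x div p ^ s"
proof -
  have M: "p ^ s > 0" using p by simp
  have e: "card {k\<in>Pset p x. p ^ s dvd (x - k)} = card {k. k < x \<and> p ^ s dvd (x - k)}"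
    using cnt_eq_nodvd[OF p s le_refl px] by simp
  show ?thesis using e count_upper[OF M, of x] count_lower[OF M le_refl, of x] by simp
qed

lemma Wt_mono:
  assumes p: "p > 1" and xy: "x \<le> y" and y: "y < p ^ n" and py: "\<not> p dvd y" and px: "\<not> p dvd x"
  shows "Wt p x x \<le> Wt p x y"
proof -
  have x: "x < p ^ n" using xy y by simp
  have "Wt p x x = (\<Sum>s<n. cc p s * card {k\<in>Pset p x. p ^ s dvd (x - k)})"
    by (rule Wt_decomp[OF p le_refl x])
  also have "\<dots> \<le> (\<Sum>s<n. cc p s * card {k\<in>Pset p x. p ^ s dvd (y - k)})"
  proof (rule sum_mono)
    fix s assume "s \<in> {..<n}"
    show "cc p s * card {k\<in>Pset p x. p ^ s dvd (x - k)} \<le> cc p s * card {k\<in>Pset p x. p ^ s dvd (y - k)}"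
    proof (cases "s = 0")
      case True then show ?thesis by simp
    next
      case False
      then have "s \<ge> 1" by simp
      then show ?thesis using cnt_mono[OF p _ xy py px] by (intro mult_le_mono2) simp
    qed
  qed
  also have "\<dots> = Wt p x y" by (rule Wt_decomp[OF p xy y, symmetric])
  finally show ?thesis .
qed

lemma card_Pset:
  assumes p: "p > 1" and pj: "\<not> p dvd j"
  shows "card (Pset p j) = j - j div p - 1"
proof -
  define M where "M = {k. k < j \<and> p dvd k}"
  have j0: "j > 0" using pj by (cases j) auto
  have M: "M = (\<lambda>i. p * i) ` {..j div p}"
  proof
    show "M \<subseteq> (\<lambda>i. p * i) ` {..j div p}"
    proof
      fix k assume "k \<in> M"
      then obtain i where i: "k = p * i" "k < j" unfolding M_def by auto
      then have "i * p \<le> j" by (simp add: mult.commute)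
      then have "i \<le> j div p" using p by (simp add: less_eq_div_iff_mult_less_eq)
      then show "k \<in> (\<lambda>i. p * i) ` {..j div p}" using i by auto
    qed
    show "(\<lambda>i. p * i) ` {..j div p} \<subseteq> M"
    proof
      fix k assume "k \<in> (\<lambda>i. p * i) ` {..j div p}"
      then obtain i where i: "k = p * i" "i \<le> j div p" by auto
      then have "i * p \<le> j" using p by (simp add: less_eq_div_iff_mult_less_eq)
      then have "k \<le> j" using i by (simp add: mult.commute)
      moreover have "k \<noteq> j" using i pj by auto
      ultimately show "k \<in> M" unfolding M_def using i by auto
    qed
  qed
  have inj: "inj_on (\<lambda>i. p * i) {..j div p}" using p by (intro inj_onI) simp
  have cM: "card M = j div p + 1" unfolding M using card_image[OF inj] by simp
  have un: "{..<j} = Pset p j \<union> M" unfolding Pset_def M_def by auto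
  have dis: "Pset p j \<inter> M = {}" unfolding Pset_def M_def by auto
  have fM: "finite M" unfolding M_def by simp
  have "j = card (Pset p j \<union> M)" using un card_lessThan[of j] by simp
  also have "\<dots> = card (Pset p j) + card M" by (rule card_Un_disjoint[OF finite_Pset fM dis])
  finally have "j = card (Pset p j) + card M" .
  then show ?thesis using cM by simp
qed

lemma abel1:
  fixes F :: "nat \<Rightarrow> int" and P :: int
  shows "(\<Sum>s\<le>N. F s * P ^ s) - (\<Sum>s\<le>N. F (s + 1) * P ^ s)
    = F 0 + (\<Sum>s\<in>{1..N}. F s * (P ^ s - P ^ (s - 1))) - F (N + 1) * P ^ N"
proof (induction N)
  case 0 then show ?case by simp
next
  case (Suc N)
  have "(\<Sum>s\<in>{1..Suc N}. F s * (P ^ s - P ^ (s - 1))) = (\<Sum>s\<in>{1..N}. F s * (P ^ s - P ^ (s - 1))) + F (Suc N) * (P ^ Suc N - P ^ N)"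
    by simp
  then show ?case using Suc by (simp add: algebra_simps)
qed

lemma L_closed:
  fixes F :: "nat \<Rightarrow> int" and P :: int
  shows "(\<Sum>s\<le>N. ((F s - P * F (s + 1)) * int (s + 1) - (F (s + 1) - P * F (s + 2)) * int (s + 2)) * P ^ s)
    = (\<Sum>s\<le>N. F s * P ^ s) - int (N + 1) * F (N + 1) * P ^ (N + 1)
      - (F 1 + (\<Sum>s\<le>N. F (s + 1) * P ^ s) - int (N + 2) * F (N + 2) * P ^ (N + 1))"
proof (induction N)
  case 0 then show ?case by (simp add: algebra_simps)
next
  case (Suc N)
  then show ?case by (simp add: algebra_simps)
qed

lemma digit_int: assumes "p > 0" shows "int (digit p j s) = int (j div p ^ s) - int p * int (j div p ^ (s + 1))"
proof -
  have "j div p ^ (s + 1) = j div (p ^ s * p)" by (simp add: mult.commute)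
  also have "\<dots> = j div p ^ s div p" by (rule div_mult2_eq)
  finally have "j div p ^ (s + 1) = j div p ^ s div p" .
  moreover have "j div p ^ s = p * (j div p ^ s div p) + j div p ^ s mod p" by simp
  ultimately have "j div p ^ s = p * (j div p ^ (s + 1)) + digit p j s" unfolding digit_def by simp
  then have "int (j div p ^ s) = int p * int (j div p ^ (s + 1)) + int (digit p j s)"
    by (metis of_nat_add of_nat_mult)
  then show ?thesis by simp
qed

lemma Wt_formula:
  assumes p: "p > 1" and n: "n \<ge> 1" and j: "j < p ^ n" and pj: "\<not> p dvd j"
  shows "int (Wt p j j) = - 1 + (\<Sum>s\<le>n. (int (digit p j s) * int (s + 1) - int (digit p j (s + 1)) * int (s + 2)) * int p ^ s)"
proof -
  define F where "F = (\<lambda>s. int (j div p ^ s))"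
  define P where "P = int p"
  have split: "{..<n} = insert 0 {1..<n}" using n by auto
  have "Wt p j j = (\<Sum>s<n. cc p s * card {k\<in>Pset p j. p ^ s dvd (j - k)})"
    by (rule Wt_decomp[OF p le_refl j])
  also have "\<dots> = card (Pset p j) + (\<Sum>s\<in>{1..<n}. (p ^ s - p ^ (s - 1)) * (j div p ^ s))"
  proof -
    have "(\<Sum>s\<in>{1..<n}. cc p s * card {k\<in>Pset p j. p ^ s dvd (j - k)}) = (\<Sum>s\<in>{1..<n}. (p ^ s - p ^ (s - 1)) * (j div p ^ s))"
    proof (rule sum.cong[OF refl])
      fix s assume s: "s \<in> {1..<n}"
      then have "s \<ge> 1" by simp
      then show "cc p s * card {k\<in>Pset p j. p ^ s dvd (j - k)} = (p ^ s - p ^ (s - 1)) * (j div p ^ s)"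
        using cnt_exact[OF p _ pj] unfolding cc_def by simp
    qed
    moreover have "{k\<in>Pset p j. p ^ 0 dvd (j - k)} = Pset p j" by simp
    ultimately show ?thesis by (subst split, subst sum.insert) (auto simp: cc_def)
  qed
  finally have W1: "Wt p j j = card (Pset p j) + (\<Sum>s\<in>{1..<n}. (p ^ s - p ^ (s - 1)) * (j div p ^ s))" .
  have W2: "int (Wt p j j) = (int j - F 1 - 1) + (\<Sum>s\<in>{1..<n}. F s * (P ^ s - P ^ (s - 1)))"
  proof -
    have c: "int (card (Pset p j)) = int j - F 1 - 1"
    proof -
      have "j div p + 1 \<le> j"
      proof -
        have "j > 0" using pj by (cases j) auto
        have "j div p < j" using p \<open>j > 0\<close> by simp
        then show ?thesis by simp
      qed
      then show ?thesis unfolding card_Pset[OF p pj] F_def by simp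
    qed
    have t: "int ((p ^ s - p ^ (s - 1)) * (j div p ^ s)) = F s * (P ^ s - P ^ (s - 1))" if "s \<ge> 1" for s
    proof -
      have "p ^ (s - 1) \<le> p ^ s" using p by (simp add: power_increasing)
      then show ?thesis unfolding F_def P_def by (simp add: of_nat_diff mult.commute)
    qed
    show ?thesis unfolding W1 using c t by (simp add: of_nat_sum)
  qed
  have p0: "p > 0" using p by simp
  have Fbig: "F s = 0" if "s \<ge> n" for s
  proof -
    have "p ^ n \<le> p ^ s" using p that by (simp add: power_increasing)
    then show ?thesis unfolding F_def using j by simp
  qed
  have "(\<Sum>s\<le>n. (int (digit p j s) * int (s + 1) - int (digit p j (s + 1)) * int (s + 2)) * int p ^ s)
     = (\<Sum>s\<le>n. ((F s - P * F (s + 1)) * int (s + 1) - (F (s + 1) - P * F (s + 2)) * int (s + 2)) * P ^ s)"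
    unfolding F_def P_def using digit_int[OF p0] by (simp add: add.assoc)
  also have "\<dots> = (\<Sum>s\<le>n. F s * P ^ s) - int (n + 1) * F (n + 1) * P ^ (n + 1)
      - (F 1 + (\<Sum>s\<le>n. F (s + 1) * P ^ s) - int (n + 2) * F (n + 2) * P ^ (n + 1))"
    by (rule L_closed)
  also have "\<dots> = (\<Sum>s\<le>n. F s * P ^ s) - (\<Sum>s\<le>n. F (s + 1) * P ^ s) - F 1"
    using Fbig[of "n + 1"] Fbig[of "n + 2"] by simp
  also have "\<dots> = F 0 + (\<Sum>s\<in>{1..n}. F s * (P ^ s - P ^ (s - 1))) - F (n + 1) * P ^ n - F 1"
    by (subst abel1) (rule refl)
  also have "(\<Sum>s\<in>{1..n}. F s * (P ^ s - P ^ (s - 1))) = (\<Sum>s\<in>{1..<n}. F s * (P ^ s - P ^ (s - 1)))"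
  proof -
    have "{1..n} = insert n {1..<n}" using n by auto
    then show ?thesis using Fbig[of n] by simp
  qed
  finally have R: "(\<Sum>s\<le>n. (int (digit p j s) * int (s + 1) - int (digit p j (s + 1)) * int (s + 2)) * int p ^ s)
     = F 0 + (\<Sum>s\<in>{1..<n}. F s * (P ^ s - P ^ (s - 1))) - F 1"
    using Fbig[of "n + 1"] by simp
  have "F 0 = int j" unfolding F_def by simp
  then show ?thesis using W2 R by simp
qed



lemma Zloc_intro: "\<not> int p dvd b \<Longrightarrow> of_int a / of_int b \<in> Zloc p"
  unfolding Zloc_def by blast

lemma Zloc_int: "prime p \<Longrightarrow> of_int a \<in> Zloc p"
proof -
  assume "prime p"
  then have "\<not> int p dvd 1" using prime_gt_1_nat[of p] by auto
  then have "of_int a / of_int 1 \<in> Zloc p" by (rule Zloc_intro)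
  then show ?thesis by simp
qed

lemma Zloc_0: "prime p \<Longrightarrow> 0 \<in> Zloc p"
  using Zloc_int[of p 0] by simp

lemma Zloc_1: "prime p \<Longrightarrow> 1 \<in> Zloc p"
  using Zloc_int[of p 1] by simp

lemma Zloc_add:
  assumes p: "prime p" and x: "x \<in> Zloc p" and y: "y \<in> Zloc p"
  shows "x + y \<in> Zloc p"
proof -
  obtain a b where xab: "x = of_int a / of_int b" and b: "\<not> int p dvd b" using x unfolding Zloc_def by blast
  obtain c d where ycd: "y = of_int c / of_int d" and d: "\<not> int p dvd d" using y unfolding Zloc_def by blast
  have b0: "b \<noteq> 0" using b by auto
  have d0: "d \<noteq> 0" using d by auto
  have pp: "prime (int p)" using p by simp
  have bd: "\<not> int p dvd (b * d)" using b d pp by (simp add: prime_dvd_mult_iff)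
  have eq: "x + y = of_int (a * d + c * b) / of_int (b * d)"
    using b0 d0 by (simp add: xab ycd field_simps)
  show ?thesis unfolding eq by (rule Zloc_intro[OF bd])
qed

lemma Zloc_mult:
  assumes p: "prime p" and x: "x \<in> Zloc p" and y: "y \<in> Zloc p"
  shows "x * y \<in> Zloc p"
proof -
  obtain a b where xab: "x = of_int a / of_int b" and b: "\<not> int p dvd b" using x unfolding Zloc_def by blast
  obtain c d where ycd: "y = of_int c / of_int d" and d: "\<not> int p dvd d" using y unfolding Zloc_def by blast
  have pp: "prime (int p)" using p by simp
  have bd: "\<not> int p dvd (b * d)" using b d pp by (simp add: prime_dvd_mult_iff)
  have eq: "x * y = of_int (a * c) / of_int (b * d)"
    by (simp add: xab ycd)
  show ?thesis unfolding eq by (rule Zloc_intro[OF bd])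
qed

lemma Zloc_uminus:
  assumes x: "x \<in> Zloc p"
  shows "- x \<in> Zloc p"
proof -
  obtain a b where xab: "x = of_int a / of_int b" and b: "\<not> int p dvd b" using x unfolding Zloc_def by blast
  have eq: "- x = of_int (- a) / of_int b" by (simp add: xab)
  show ?thesis unfolding eq by (rule Zloc_intro[OF b])
qed

section \<open>Roots of unity product\<close>

lemma roots_prod_poly:
  fixes \<eta> :: complex
  assumes d: "d > 0" and eta: "\<eta> ^ d = 1" and prim: "\<forall>k. 0 < k \<and> k < d \<longrightarrow> \<eta> ^ k \<noteq> 1"
  shows "(\<Prod>k<d. [:-(\<eta>^k), 1:]) = monom 1 d - 1"
proof -
  define Q :: "complex poly" where "Q = monom 1 d - 1"
  have polyQ: "poly Q x = x ^ d - 1" for x by (simp add: Q_def poly_monom)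
  have Q0: "Q \<noteq> 0" using polyQ[of 0] d by (auto simp: power_0_left)
  have dQ: "pderiv Q = monom (of_nat d) (d - 1)"
    by (simp add: Q_def pderiv_diff pderiv_monom)
  have rsf: "rsquarefree Q"
    unfolding rsquarefree_roots
  proof (intro allI notI)
    fix a assume "poly Q a = 0 \<and> poly (pderiv Q) a = 0"
    then have "a ^ d = 1" "of_nat d * a ^ (d - 1) = 0" by (auto simp: polyQ dQ poly_monom)
    then show False using d by (auto simp: power_0_left)
  qed
  have QQ: "Q = monom 1 d + [:-1:]" by (simp add: Q_def monom_0 flip: pCons_one)
  have degm: "degree (monom (1::complex) d) = d" by (simp add: degree_monom_eq)
  have "lead_coeff ([:-1:] + monom 1 d) = lead_coeff (monom (1::complex) d)"
    by (rule lead_coeff_add_le) (use d degm in simp)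
  moreover have "lead_coeff Q = lead_coeff ([:-1:] + monom 1 d)"
    by (simp only: QQ add.commute)
  ultimately have lc: "lead_coeff Q = 1" using degm by simp
  have inj: "inj_on (\<lambda>k. \<eta> ^ k) {..<d}"
  proof (rule inj_onI)
    fix a b assume ab: "a \<in> {..<d}" "b \<in> {..<d}" "\<eta> ^ a = \<eta> ^ b"
    have e0: "\<eta> \<noteq> 0" using eta d by (auto simp: power_0_left)
    show "a = b"
    proof (rule ccontr)
      assume "a \<noteq> b"
      then consider "a < b" | "b < a" by linarith
      then show False
      proof cases
        case 1
        have "\<eta> ^ b = \<eta> ^ a * \<eta> ^ (b - a)" using 1 by (simp add: power_add[symmetric])
        then have "\<eta> ^ (b - a) = 1" using ab(3) e0 by simp
        then show False using prim 1 ab by auto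
      next
        case 2
        have "\<eta> ^ a = \<eta> ^ b * \<eta> ^ (a - b)" using 2 by (simp add: power_add[symmetric])
        then have "\<eta> ^ (a - b) = 1" using ab(3) e0 by simp
        then show False using prim 2 ab by auto
      qed
    qed
  qed
  have sub: "(\<lambda>k. \<eta> ^ k) ` {..<d} \<subseteq> {x. x ^ d = 1}"
  proof
    fix x assume "x \<in> (\<lambda>k. \<eta> ^ k) ` {..<d}"
    then obtain k where "x = \<eta> ^ k" by auto
    then have "x ^ d = (\<eta> ^ d) ^ k" by (simp add: power_mult[symmetric] mult.commute)
    then show "x \<in> {x. x ^ d = 1}" using eta by simp
  qed
  have roots: "{x. poly Q x = 0} = (\<lambda>k. \<eta> ^ k) ` {..<d}"
  proof -
    have "card ((\<lambda>k. \<eta> ^ k) ` {..<d}) = card {x::complex. x ^ d = 1}"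
      using card_image[OF inj] card_roots_unity_eq[OF d] by simp
    then have "(\<lambda>k. \<eta> ^ k) ` {..<d} = {x. x ^ d = 1}"
      using sub d by (intro card_subset_eq finite_roots_unity) auto
    then show ?thesis by (simp add: polyQ)
  qed
  have "Q = smult (lead_coeff Q) (\<Prod>x|poly Q x = 0. [:-x, 1:])"
    using complex_poly_decompose_rsquarefree[OF rsf] by simp
  also have "\<dots> = (\<Prod>x\<in>(\<lambda>k. \<eta> ^ k) ` {..<d}. [:-x, 1:])" using lc roots by simp
  also have "\<dots> = (\<Prod>k<d. [:-(\<eta>^k), 1:])" by (subst prod.reindex[OF inj]) simp
  finally show ?thesis by (simp add: Q_def)
qed

lemma roots_prod_eval:
  fixes \<eta> c :: complex
  assumes d: "d > 0" and eta: "\<eta> ^ d = 1" and prim: "\<forall>k. 0 < k \<and> k < d \<longrightarrow> \<eta> ^ k \<noteq> 1"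
    and c: "c \<noteq> 0"
  shows "(\<Prod>k<d. (1 - c * \<eta>^k)) = 1 - c ^ d"
proof -
  have "poly (\<Prod>k<d. [:-(\<eta>^k), 1:]) (1/c) = poly (monom 1 d - 1) (1/c)"
    using roots_prod_poly[OF d eta prim] by simp
  then have e: "(\<Prod>k<d. (1/c - \<eta>^k)) = (1/c) ^ d - 1" by (simp add: poly_prod poly_monom)
  have "(\<Prod>k<d. (1 - c * \<eta>^k)) = (\<Prod>k<d. c * (1/c - \<eta>^k))"
    using c by (intro prod.cong) (auto simp: field_simps)
  also have "\<dots> = c ^ d * (\<Prod>k<d. (1/c - \<eta>^k))" by (simp add: prod.distrib)
  also have "\<dots> = c ^ d * ((1/c) ^ d - 1)" by (simp add: e)
  also have "\<dots> = c ^ d * (1/c) ^ d - c ^ d" by (simp only: right_diff_distrib mult_1_right)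
  also have "c ^ d * (1/c) ^ d = 1"
  proof -
    have "c ^ d * (1/c) ^ d = (c * (1/c)) ^ d" by (rule power_mult_distrib[symmetric])
    also have "\<dots> = 1" using c by simp
    finally show ?thesis .
  qed
  finally show ?thesis .
qed

section \<open>Determinant congruence\<close>

lemma det_cong_diag:
  fixes N :: "int mat" and P B :: int
  assumes N: "N \<in> carrier_mat m m"
    and off: "\<And>i j. i < m \<Longrightarrow> j < m \<Longrightarrow> i \<noteq> j \<Longrightarrow> P dvd N $$ (i, j)"
    and dg: "\<And>i. i < m \<Longrightarrow> [N $$ (i, i) = B] (mod P)"
  shows "[det N = B ^ m] (mod P)"
proof -
  let ?PU = "{\<pi>. \<pi> permutes {0..<m}}"
  let ?f = "\<lambda>\<pi>. signof \<pi> * (\<Prod>i = 0..<m. N $$ (i, \<pi> i))"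
  have fin: "finite ?PU" by (simp add: finite_permutations)
  have idin: "id \<in> ?PU" by (simp add: permutes_id)
  have detN: "det N = ?f id + sum ?f (?PU - {id})"
    unfolding det_def'[OF N] using sum.remove[OF fin idin, of ?f] by simp
  moreover have "[?f id = B ^ m] (mod P)"
  proof -
    have "[(\<Prod>i = 0..<m. N $$ (i, i)) = (\<Prod>i = 0..<m. B)] (mod P)"
      by (rule cong_prod) (use dg in auto)
    then show ?thesis by (simp add: sign_id)
  qed
  moreover have "[sum ?f (?PU - {id}) = 0] (mod P)"
    unfolding cong_0_iff
  proof (rule dvd_sum)
    fix \<pi> assume "\<pi> \<in> ?PU - {id}"
    then have pi: "\<pi> permutes {0..<m}" "\<pi> \<noteq> id" by auto
    obtain i where i: "\<pi> i \<noteq> i" using pi(2) by (metis eq_id_iff)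
    have im: "i < m" using i pi(1) by (meson atLeastLessThan_iff permutes_not_in zero_le)
    have pim: "\<pi> i < m" using pi(1) im by (simp add: permutes_in_image)
    have "P dvd N $$ (i, \<pi> i)" using off[OF im pim] i by simp
    moreover have "N $$ (i, \<pi> i) dvd (\<Prod>i = 0..<m. N $$ (i, \<pi> i))"
      using im by (intro dvd_prodI) auto
    ultimately show "P dvd ?f \<pi>" by (meson dvd_mult dvd_trans)
  qed
  ultimately have "[?f id + sum ?f (?PU - {id}) = B ^ m + 0] (mod P)" using cong_add by blast
  then show ?thesis using detN by simp
qed

section \<open>The ring T\<close>

locale cyc =
  fixes p n :: nat and z :: complex
  assumes p: "prime p" and n: "n \<ge> 1"
    and zq: "z ^ (p ^ n) = 1" and zprim: "\<forall>k. 0 < k \<and> k < p ^ n \<longrightarrow> z ^ k \<noteq> 1"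
begin

abbreviation "q \<equiv> p ^ n"
abbreviation "S \<equiv> cyc_ring p n z"

lemma q_pos: "q > 0" using p by (simp add: prime_gt_0_nat)

lemma z_pow_mod: "z ^ m = z ^ (m mod q)"
proof -
  have e: "m = q * (m div q) + m mod q" by simp
  have "z ^ m = z ^ (q * (m div q)) * z ^ (m mod q)" by (subst e, rule power_add)
  also have "\<dots> = (z ^ q) ^ (m div q) * z ^ (m mod q)" by (simp add: power_mult)
  finally show ?thesis using zq by simp
qed

lemma z_pow_eq_1_iff: "z ^ m = 1 \<longleftrightarrow> q dvd m"
proof
  assume "z ^ m = 1"
  then have "z ^ (m mod q) = 1" using z_pow_mod by simp
  moreover have "m mod q < q" using q_pos by simp
  ultimately have "m mod q = 0" using zprim by (metis neq0_conv)
  then show "q dvd m" by auto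
next
  assume "q dvd m" then obtain k where "m = q * k" by auto
  then show "z ^ m = 1" by (simp add: power_mult zq)
qed

lemma z_nonzero: "z \<noteq> 0" using zq q_pos by (metis power_0_left less_not_refl zero_neq_one)

lemma S_intro: "(\<forall>k. c k \<in> Zloc p) \<Longrightarrow> (\<Sum>k<q. c k * z ^ k) \<in> S"
  unfolding cyc_ring_def by blast

lemma S_term: assumes "c \<in> Zloc p" shows "c * z ^ m \<in> S"
proof -
  let ?d = "\<lambda>k. if k = m mod q then c else 0"
  have "(\<Sum>k<q. ?d k * z ^ k) = (\<Sum>k<q. if k = m mod q then c * z ^ k else 0)"
    by (rule sum.cong) auto
  also have "\<dots> = c * z ^ (m mod q)"
    using q_pos by (simp add: sum.delta)
  also have "\<dots> = c * z ^ m" using z_pow_mod by simp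
  finally have "c * z ^ m = (\<Sum>k<q. ?d k * z ^ k)" by simp
  moreover have "\<forall>k. ?d k \<in> Zloc p" using assms Zloc_0[OF p] by auto
  ultimately show ?thesis using S_intro[of ?d] by simp
qed

lemma S_zpow: "z ^ m \<in> S" using S_term[OF Zloc_1[OF p], of m] by simp
lemma S_one: "1 \<in> S" using S_zpow[of 0] by simp
lemma S_zero: "0 \<in> S" using S_term[OF Zloc_0[OF p], of 0] by simp
lemma S_z: "z \<in> S" using S_zpow[of 1] by simp
lemma S_Zloc: "c \<in> Zloc p \<Longrightarrow> c \<in> S" using S_term[of c 0] by simp
lemma S_int: "of_int a \<in> S" using S_Zloc[OF Zloc_int[OF p]] by simp
lemma S_nat: "of_nat a \<in> S" using S_int[of "int a"] by simp

lemma S_add: assumes "x \<in> S" "y \<in> S" shows "x + y \<in> S"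
proof -
  obtain c where c: "x = (\<Sum>k<q. c k * z ^ k)" "\<forall>k. c k \<in> Zloc p" using assms(1) unfolding cyc_ring_def by blast
  obtain d where d: "y = (\<Sum>k<q. d k * z ^ k)" "\<forall>k. d k \<in> Zloc p" using assms(2) unfolding cyc_ring_def by blast
  have "x + y = (\<Sum>k<q. (c k + d k) * z ^ k)" by (simp add: c d sum.distrib distrib_right)
  moreover have "\<forall>k. c k + d k \<in> Zloc p" using c d Zloc_add[OF p] by blast
  ultimately show ?thesis using S_intro[of "\<lambda>k. c k + d k"] by simp
qed

lemma S_uminus: assumes "x \<in> S" shows "- x \<in> S"
proof -
  obtain c where c: "x = (\<Sum>k<q. c k * z ^ k)" "\<forall>k. c k \<in> Zloc p" using assms(1) unfolding cyc_ring_def by blast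
  have "- x = (\<Sum>k<q. (- c k) * z ^ k)" by (simp add: c sum_negf)
  moreover have "\<forall>k. - c k \<in> Zloc p" using c Zloc_uminus by blast
  ultimately show ?thesis using S_intro[of "\<lambda>k. - c k"] by simp
qed

lemma S_diff: "x \<in> S \<Longrightarrow> y \<in> S \<Longrightarrow> x - y \<in> S"
  using S_add[of x "- y"] S_uminus[of y] by simp

lemma S_sum: "(\<And>i. i \<in> A \<Longrightarrow> f i \<in> S) \<Longrightarrow> sum f A \<in> S"
proof (induction A rule: infinite_finite_induct)
  case (infinite A) then show ?case using S_zero by simp
next
  case empty then show ?case using S_zero by simp
next
  case (insert x F) then show ?case using S_add by simp
qed

lemma S_mult: assumes "x \<in> S" "y \<in> S" shows "x * y \<in> S"
proof -
  obtain c where c: "x = (\<Sum>k<q. c k * z ^ k)" "\<forall>k. c k \<in> Zloc p" using assms(1) unfolding cyc_ring_def by blast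
  obtain d where d: "y = (\<Sum>k<q. d k * z ^ k)" "\<forall>k. d k \<in> Zloc p" using assms(2) unfolding cyc_ring_def by blast
  have "x * y = (\<Sum>k<q. \<Sum>l<q. (c k * d l) * z ^ (k + l))"
    by (simp add: c d sum_product power_add mult_ac)
  also have "\<dots> \<in> S"
    by (intro S_sum S_term Zloc_mult[OF p]) (use c d in auto)
  finally show ?thesis .
qed

lemma S_prod: "(\<And>i. i \<in> A \<Longrightarrow> f i \<in> S) \<Longrightarrow> prod f A \<in> S"
proof (induction A rule: infinite_finite_induct)
  case (infinite A) then show ?case using S_one by simp
next
  case empty then show ?case using S_one by simp
next
  case (insert x F) then show ?case using S_mult by simp
qed

lemma S_power: "x \<in> S \<Longrightarrow> x ^ k \<in> S"
  using S_prod[of "{..<k}" "\<lambda>_. x"] by simp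

definition unit :: "complex \<Rightarrow> bool" where "unit u \<longleftrightarrow> unit_in S u"

lemma unit_S: "unit u \<Longrightarrow> u \<in> S" unfolding unit_def unit_in_def by simp
lemma unit_nz: "unit u \<Longrightarrow> u \<noteq> 0" unfolding unit_def unit_in_def by simp
lemma unit_inv: "unit u \<Longrightarrow> 1 / u \<in> S" unfolding unit_def unit_in_def by simp
lemma unit_intro: assumes "u \<in> S" "v \<in> S" "u * v = 1" shows "unit u"
proof -
  have u0: "u \<noteq> 0" using assms(3) by auto
  have "1 / u = v" using assms(3) u0 by (simp add: field_simps)
  then show ?thesis unfolding unit_def unit_in_def using assms u0 by simp
qed
lemma unit_one: "unit 1" using unit_intro[OF S_one S_one] by simp
lemma unit_mult: assumes "unit u" "unit v" shows "unit (u * v)"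
proof (rule unit_intro)
  show "u * v \<in> S" using assms unit_S S_mult by blast
  show "(1/u) * (1/v) \<in> S" using assms unit_inv S_mult by blast
  show "u * v * ((1/u) * (1/v)) = 1" using assms unit_nz by simp
qed
lemma unit_inverse: "unit u \<Longrightarrow> unit (1 / u)"
  using unit_intro[of "1/u" u] unit_S unit_inv unit_nz by simp
lemma unit_div: "unit u \<Longrightarrow> unit v \<Longrightarrow> unit (u / v)"
  using unit_mult[of u "1/v"] unit_inverse[of v] by simp
lemma unit_prod: "(\<And>i. i \<in> A \<Longrightarrow> unit (f i)) \<Longrightarrow> unit (prod f A)"
proof (induction A rule: infinite_finite_induct)
  case (infinite A) then show ?case using unit_one by simp
next
  case empty then show ?case using unit_one by simp
next
  case (insert x F) then show ?case using unit_mult by simp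
qed
lemma unit_power: "unit u \<Longrightarrow> unit (u ^ k)"
  using unit_prod[of "{..<k}" "\<lambda>_. u"] by simp
lemma unit_uminus: "unit u \<Longrightarrow> unit (- u)"
  using unit_intro[of "-u" "-(1/u)"] unit_S unit_inv unit_nz S_uminus by simp
lemma unit_zpow: "unit (z ^ k)"
proof (rule unit_intro[OF S_zpow S_zpow])
  have e: "k * q = k + k * (q - 1)" using q_pos by (cases q) auto
  have "z ^ k * z ^ (k * (q - 1)) = z ^ (k * q)"
    by (subst e) (simp add: power_add)
  also have "\<dots> = 1" by (simp add: power_mult[symmetric] mult.commute[of k] power_mult zq)
  finally show "z ^ k * z ^ (k * (q - 1)) = 1" .
qed


abbreviation "t \<equiv> 1 - z"

lemma p_gt1: "p > 1" using p prime_gt_1_nat by blast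

lemma geom_unit:
  assumes s: "s < n" and m: "\<not> p dvd m'"
  shows "\<exists>u. unit u \<and> 1 - z ^ (p ^ s * m') = (1 - z ^ (p ^ s)) * u"
proof -
  define w where "w = z ^ (p ^ s)"
  define g where "g = (\<Sum>k<m'. w ^ k)"
  have e1: "1 - w ^ m' = (1 - w) * g" unfolding g_def by (rule one_diff_power_eq)
  have cop: "coprime m' (p ^ (n - s))"
    using prime_imp_coprime[OF p m] by (simp add: coprime_commute)
  obtain m'' where mm: "[m' * m'' = Suc 0] (mod p ^ (n - s))" using cong_solve_coprime_nat[OF cop] by blast
  have ns: "p ^ (n - s) > 1" using s p_gt1 one_less_power[of p "n - s"] by simp
  have mm1: "(m' * m'') mod p ^ (n - s) = 1" using mm ns s p_gt1 unfolding cong_def by simp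
  have qs: "q = p ^ s * p ^ (n - s)" using s by (simp add: power_add[symmetric])
  have "(p ^ s * (m' * m'')) mod q = p ^ s * ((m' * m'') mod p ^ (n - s))"
    unfolding qs by (rule mult_mod_right[symmetric])
  then have "(p ^ s * (m' * m'')) mod q = p ^ s" using mm1 by simp
  then have wmm: "(w ^ m') ^ m'' = w"
    unfolding w_def by (metis power_mult z_pow_mod mult.assoc)
  define h where "h = (\<Sum>k<m''. (w ^ m') ^ k)"
  have e2: "1 - (w ^ m') ^ m'' = (1 - w ^ m') * h" unfolding h_def by (rule one_diff_power_eq)
  have w1: "w \<noteq> 1"
  proof
    assume "w = 1"
    then have "q dvd p ^ s" unfolding w_def using z_pow_eq_1_iff by simp
    moreover have "p ^ s < q" using s p_gt1 by simp
    moreover have "p ^ s > 0" using p_gt1 by simp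
    ultimately show False by (simp add: nat_dvd_not_less)
  qed
  have "(1 - w) * 1 = (1 - w) * (g * h)" using e1 e2 wmm by (simp add: mult.assoc)
  then have gh: "g * h = 1" using w1 by simp
  have gS: "g \<in> S" unfolding g_def w_def by (intro S_sum S_power S_zpow)
  have hS: "h \<in> S" unfolding h_def w_def by (intro S_sum S_power S_zpow)
  have "unit g" by (rule unit_intro[OF gS hS gh])
  moreover have "1 - z ^ (p ^ s * m') = (1 - z ^ (p ^ s)) * g"
    using e1 unfolding w_def by (simp add: power_mult)
  ultimately show ?thesis by blast
qed

lemma t_unit:
  assumes "\<not> p dvd j"
  shows "\<exists>u. unit u \<and> 1 - z ^ j = t * u"
  using geom_unit[of 0 j] n assms by simp

lemma one_minus_zpow_ps:
  assumes s: "s < n"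
  shows "\<exists>u. unit u \<and> 1 - z ^ (p ^ s) = t ^ (p ^ s) * u"
proof -
  define \<eta> where "\<eta> = z ^ (p ^ (n - s))"
  define d where "d = p ^ s"
  have d: "d > 0" unfolding d_def using p_gt1 by simp
  have qs: "q = p ^ (n - s) * d" unfolding d_def using s by (simp add: power_add[symmetric])
  have eta: "\<eta> ^ d = 1" unfolding \<eta>_def by (simp add: power_mult[symmetric] qs[symmetric] zq)
  have prim: "\<forall>k. 0 < k \<and> k < d \<longrightarrow> \<eta> ^ k \<noteq> 1"
  proof (intro allI impI)
    fix k assume k: "0 < k \<and> k < d"
    have "p ^ (n - s) * k < q" using k qs p_gt1 by simp
    moreover have "0 < p ^ (n - s) * k" using k p_gt1 by simp
    ultimately show "\<eta> ^ k \<noteq> 1" unfolding \<eta>_def using zprim by (simp add: power_mult[symmetric])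
  qed
  have prodeq: "(\<Prod>k<d. (1 - z * \<eta>^k)) = 1 - z ^ d"
    by (rule roots_prod_eval[OF d eta prim z_nonzero])
  have "\<forall>k. \<exists>u. unit u \<and> 1 - z * \<eta> ^ k = t * u"
  proof
    fix k
    have "p dvd p ^ (n - s) * k" using s by (simp add: dvd_power)
    have "\<not> p dvd (1 + p ^ (n - s) * k)"
    proof
      assume "p dvd (1 + p ^ (n - s) * k)"
      from dvd_diff_nat[OF this \<open>p dvd p ^ (n - s) * k\<close>] have "p dvd 1" by simp
      then show False using p_gt1 by simp
    qed
    from t_unit[OF this] show "\<exists>u. unit u \<and> 1 - z * \<eta> ^ k = t * u"
      unfolding \<eta>_def by (simp add: power_add power_mult)
  qed
  then obtain U where U: "\<And>k. unit (U k)" "\<And>k. 1 - z * \<eta> ^ k = t * U k" by metis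
  have "1 - z ^ d = (\<Prod>k<d. t * U k)" using prodeq U(2) by simp
  also have "\<dots> = t ^ d * (\<Prod>k<d. U k)" by (simp add: prod.distrib)
  finally show ?thesis unfolding d_def using unit_prod[of "{..<p^s}" U] U(1) by blast
qed

lemma one_minus_zpow:
  assumes m: "0 < m" "m < q"
  shows "\<exists>u. unit u \<and> 1 - z ^ m = t ^ (p ^ multiplicity p m) * u"
proof -
  define s where "s = multiplicity p m"
  obtain m' where m': "m = p ^ s * m'" "\<not> p dvd m'"
  proof -
    have h: "m \<noteq> 0" "\<not> is_unit p" using m p_gt1 by auto
    obtain y where y: "m = p ^ multiplicity p m * y" "\<not> p dvd y"
      by (rule multiplicity_decompose'[OF h])
    show thesis using that[of y] y unfolding s_def by simp
  qed
  have m0: "m' \<noteq> 0"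
  proof
    assume "m' = 0"
    then have "m = 0" using m'(1) by simp
    then show False using m by simp
  qed
  have "p ^ s * 1 \<le> p ^ s * m'" using m0 by (intro mult_le_mono2) simp
  then have "p ^ s \<le> m" using m'(1) by simp
  then have "p ^ s < p ^ n" using m(2) by linarith
  then have s: "s < n" by (rule power_less_imp_less_exp[OF p_gt1])
  obtain u1 where u1: "unit u1" "1 - z ^ (p ^ s * m') = (1 - z ^ (p ^ s)) * u1"
    using geom_unit[OF s m'(2)] by blast
  obtain u2 where u2: "unit u2" "1 - z ^ (p ^ s) = t ^ (p ^ s) * u2"
    using one_minus_zpow_ps[OF s] by blast
  have "1 - z ^ m = t ^ (p ^ s) * (u2 * u1)" using u1 u2 m'(1) by simp
  then show ?thesis using unit_mult[OF u2(1) u1(1)] unfolding s_def by blast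
qed

lemma p_factor: "\<exists>u. unit u \<and> of_nat p = t ^ ((p - 1) * p ^ (n - 1)) * u"
proof -
  define \<omega> where "\<omega> = z ^ (p ^ (n - 1))"
  have p0: "p > 0" using p_gt1 by simp
  have qs: "q = p ^ (n - 1) * p" using n by (simp add: power_Suc2[symmetric])
  have om: "\<omega> ^ p = 1" unfolding \<omega>_def power_mult[symmetric] qs[symmetric] by (rule zq)
  have prim: "\<forall>k. 0 < k \<and> k < p \<longrightarrow> \<omega> ^ k \<noteq> 1"
  proof (intro allI impI)
    fix k assume k: "0 < k \<and> k < p"
    have "p ^ (n - 1) * k < q" using k qs p_gt1 by simp
    moreover have "0 < p ^ (n - 1) * k" using k p_gt1 by simp
    ultimately show "\<omega> ^ k \<noteq> 1" unfolding \<omega>_def using zprim by (simp add: power_mult[symmetric])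
  qed
  have P: "(\<Prod>k<p. [:-(\<omega>^k), 1:]) = monom 1 p - 1" by (rule roots_prod_poly[OF p0 om prim])
  have split: "{..<p} = insert 0 {1..<p}" using p0 by auto
  have "(\<Prod>k<p. [:-(\<omega>^k), 1:]) = [:-1, 1:] * (\<Prod>k\<in>{1..<p}. [:-(\<omega>^k), 1:])"
    by (subst split, subst prod.insert) auto
  moreover have "monom 1 p - 1 = [:-1, 1:] * (\<Sum>i<p. monom (1::complex) i)"
  proof (subst poly_eq_poly_eq_iff[symmetric], rule ext)
    fix x :: complex
    have "poly (monom 1 p - 1) x = x ^ p - 1" by (simp add: poly_monom)
    also have "\<dots> = (x - 1) * (\<Sum>i<p. x ^ i)" by (rule power_diff_1_eq)
    also have "\<dots> = poly ([:-1, 1:] * (\<Sum>i<p. monom (1::complex) i)) x"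
      by (simp add: poly_sum poly_monom left_diff_distrib)
    finally show "poly (monom 1 p - 1) x = poly ([:-1, 1:] * (\<Sum>i<p. monom (1::complex) i)) x" .
  qed
  ultimately have "[:-1, 1:] * (\<Prod>k\<in>{1..<p}. [:-(\<omega>^k), 1:]) = [:-1, 1:] * (\<Sum>i<p. monom (1::complex) i)"
    using P by simp
  moreover have nz: "[:-1, 1:] \<noteq> (0::complex poly)" by simp
  ultimately have "(\<Prod>k\<in>{1..<p}. [:-(\<omega>^k), 1:]) = (\<Sum>i<p. monom (1::complex) i)"
    using mult_left_cancel by blast
  then have "poly (\<Prod>k\<in>{1..<p}. [:-(\<omega>^k), 1:]) 1 = poly (\<Sum>i<p. monom (1::complex) i) 1"
    by simp
  then have pe: "(\<Prod>k\<in>{1..<p}. (1 - \<omega>^k)) = of_nat p"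
    by (simp add: poly_prod poly_sum poly_monom)
  have "\<forall>k. \<exists>u. k \<in> {1..<p} \<longrightarrow> unit u \<and> 1 - \<omega> ^ k = t ^ (p ^ (n - 1)) * u"
  proof (intro allI)
    fix k
    show "\<exists>u. k \<in> {1..<p} \<longrightarrow> unit u \<and> 1 - \<omega> ^ k = t ^ (p ^ (n - 1)) * u"
    proof (cases "k \<in> {1..<p}")
      case True
      then have nk: "\<not> p dvd k" by (auto dest: dvd_imp_le)
      have ns: "n - 1 < n" using n by simp
      obtain u1 where u1: "unit u1" "1 - z ^ (p ^ (n - 1) * k) = (1 - z ^ (p ^ (n - 1))) * u1"
        using geom_unit[OF ns nk] by blast
      obtain u2 where u2: "unit u2" "1 - z ^ (p ^ (n - 1)) = t ^ (p ^ (n - 1)) * u2"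
        using one_minus_zpow_ps[OF ns] by blast
      have "1 - \<omega> ^ k = t ^ (p ^ (n - 1)) * (u2 * u1)"
        unfolding \<omega>_def using u1 u2 by (simp add: power_mult)
      then show ?thesis using unit_mult[OF u2(1) u1(1)] by blast
    qed auto
  qed
  then obtain U where U: "\<And>k. k \<in> {1..<p} \<Longrightarrow> unit (U k) \<and> 1 - \<omega> ^ k = t ^ (p ^ (n - 1)) * U k"
    by metis
  have "of_nat p = (\<Prod>k\<in>{1..<p}. t ^ (p ^ (n - 1)) * U k)"
    using pe U by (metis (no_types, lifting) prod.cong)
  also have "\<dots> = t ^ ((p - 1) * p ^ (n - 1)) * (\<Prod>k\<in>{1..<p}. U k)"
    by (simp add: prod.distrib power_mult[symmetric] mult.commute)
  finally show ?thesis using unit_prod[of "{1..<p}" U] U by blast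
qed


lemma Zloc_common_denom:
  fixes c :: "nat \<Rightarrow> complex" and N :: nat
  assumes c: "\<forall>k. c k \<in> Zloc p"
  shows "\<exists>B A. \<not> int p dvd B \<and> (\<forall>k<N. of_int B * c k = of_int (A k))"
proof -
  have "\<forall>k. \<exists>ab. c k = of_int (fst ab) / of_int (snd ab) \<and> \<not> int p dvd snd ab"
  proof
    fix k
    from c have "c k \<in> Zloc p" by blast
    then obtain a b where "c k = of_int a / of_int b" "\<not> int p dvd b" unfolding Zloc_def by blast
    then show "\<exists>ab. c k = of_int (fst ab) / of_int (snd ab) \<and> \<not> int p dvd snd ab"
      by (intro exI[of _ "(a, b)"]) simp
  qed
  then obtain ab where ab: "\<And>k. c k = of_int (fst (ab k)) / of_int (snd (ab k)) \<and> \<not> int p dvd snd (ab k)"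
    by metis
  define b where "b = (\<lambda>k. snd (ab k))"
  define a where "a = (\<lambda>k. fst (ab k))"
  have ck: "\<And>k. c k = of_int (a k) / of_int (b k)" using ab unfolding a_def b_def by blast
  have bk: "\<And>k. \<not> int p dvd b k" using ab unfolding b_def by blast
  have bk0: "b k \<noteq> 0" for k
  proof
    assume "b k = 0"
    then show False using bk[of k] by simp
  qed
  define B where "B = (\<Prod>k<N. b k)"
  have pp: "prime (int p)" using p by simp
  have Bnd: "\<not> int p dvd (\<Prod>k<N'. b k)" for N'
  proof (induction N')
    case 0
    have "p \<noteq> 1" using p_gt1 by simp
    then show ?case by simp
  next
    case (Suc N')
    then show ?case by (simp add: prime_dvd_mult_iff[OF pp] bk)
  qed
  have "\<forall>k<N. of_int B * c k = of_int (a k * (\<Prod>j\<in>{..<N} - {k}. b j))"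
  proof (intro allI impI)
    fix k assume k: "k < N"
    have Bk: "B = b k * (\<Prod>j\<in>{..<N} - {k}. b j)" unfolding B_def
      using k prod.remove[of "{..<N}" k b] by simp
    have "(of_int B :: complex) * c k = of_int (b k) * of_int (\<Prod>j\<in>{..<N} - {k}. b j) * (of_int (a k) / of_int (b k))"
      unfolding Bk ck by simp
    also have "\<dots> = of_int (a k) * of_int (\<Prod>j\<in>{..<N} - {k}. b j)"
      using bk0[of k] by simp
    finally show "of_int B * c k = of_int (a k * (\<Prod>j\<in>{..<N} - {k}. b j))" by simp
  qed
  moreover have "\<not> int p dvd B" using Bnd[of N] unfolding B_def .
  ultimately show ?thesis
    by (intro exI[of _ B] exI[of _ "\<lambda>k. a k * (\<Prod>j\<in>{..<N} - {k}. b j)"] conjI)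
qed

lemma shift_sum:
  assumes j: "j < q"
  shows "(\<Sum>k<q. f k * z ^ (k + j)) = (\<Sum>l<q. f ((l + q - j) mod q) * z ^ l)"
proof (rule sum.reindex_bij_witness[of _ "\<lambda>l. (l + q - j) mod q" "\<lambda>k. (k + j) mod q"])
  fix k assume k: "k \<in> {..<q}"
  show "((k + j) mod q + q - j) mod q = k"
  proof (cases "k + j < q")
    case True then show ?thesis using k by simp
  next
    case False
    then have "(k + j) mod q = k + j - q" using k j by (simp add: mod_if)
    then show ?thesis using k j False by simp
  qed
  show "(k + j) mod q \<in> {..<q}" using q_pos by simp
  show "f (((k + j) mod q + q - j) mod q) * z ^ ((k + j) mod q) = f k * z ^ (k + j)"
  proof -
    have "((k + j) mod q + q - j) mod q = k"
    proof (cases "k + j < q")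
      case True then show ?thesis using k by simp
    next
      case False
      then have "(k + j) mod q = k + j - q" using k j by (simp add: mod_if)
      then show ?thesis using k j False by simp
    qed
    then show ?thesis using z_pow_mod[of "k + j"] by simp
  qed
next
  fix l assume l: "l \<in> {..<q}"
  show "((l + q - j) mod q + j) mod q = l"
  proof (cases "l < j")
    case True
    then have "(l + q - j) mod q = l + q - j" using l j by simp
    then show ?thesis using l j True by simp
  next
    case False
    then have "(l + q - j) mod q = l - j" using l j by (simp add: mod_if)
    then show ?thesis using l j False by simp
  qed
  show "(l + q - j) mod q \<in> {..<q}" using q_pos by simp
qed

lemma inv_p_notin: "1 / of_nat p \<notin> S"
proof
  assume "1 / of_nat p \<in> S"
  then obtain c where c: "1 / of_nat p = (\<Sum>k<q. c k * z ^ k)" "\<forall>k. c k \<in> Zloc p"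
    unfolding cyc_ring_def by blast
  obtain B A where BA: "\<not> int p dvd B" "\<forall>k<q. of_int B * c k = of_int (A k)"
    using Zloc_common_denom[OF c(2), of q] by blast
  have p0: "(of_nat p :: complex) \<noteq> 0" using p_gt1 by simp
  have Y: "(of_int B / of_nat p :: complex) = (\<Sum>k<q. of_int (A k) * z ^ k)"
  proof -
    have "(of_int B / of_nat p :: complex) = of_int B * (1 / of_nat p)" by simp
    also have "\<dots> = (\<Sum>k<q. (of_int B * c k) * z ^ k)" by (simp add: c(1) sum_distrib_left mult.assoc)
    also have "\<dots> = (\<Sum>k<q. of_int (A k) * z ^ k)" using BA(2) by simp
    finally show ?thesis .
  qed
  define N :: "int mat" where "N = mat q q (\<lambda>(j, l). (if j = l then B else 0) - int p * A ((l + q - j) mod q))"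
  define v :: "complex vec" where "v = vec q (\<lambda>l. z ^ l)"
  have Ncar: "N \<in> carrier_mat q q" unfolding N_def by simp
  have row: "(\<Sum>l<q. of_int (A ((l + q - j) mod q)) * z ^ l) = of_int B / of_nat p * z ^ j" if j: "j < q" for j
  proof -
    have "of_int B / of_nat p * z ^ j = (\<Sum>k<q. of_int (A k) * z ^ (k + j))"
      by (simp add: Y sum_distrib_right power_add mult.assoc)
    also have "\<dots> = (\<Sum>l<q. of_int (A ((l + q - j) mod q)) * z ^ l)"
      by (rule shift_sum[OF j])
    finally show ?thesis by simp
  qed
  have mv: "map_mat of_int N *\<^sub>v v = 0\<^sub>v q"
  proof (rule eq_vecI)
    fix j assume j: "j < dim_vec (0\<^sub>v q :: complex vec)"
    then have j: "j < q" by simp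
    have "(map_mat of_int N *\<^sub>v v) $ j = (\<Sum>l<q. of_int (N $$ (j, l)) * z ^ l)"
      using j unfolding N_def v_def by (simp add: mult_mat_vec_def scalar_prod_def atLeast0LessThan)
    also have "\<dots> = (\<Sum>l<q. (if j = l then of_int B * z ^ l else 0) - of_nat p * (of_int (A ((l + q - j) mod q)) * z ^ l))"
      using j unfolding N_def by (intro sum.cong) (auto simp: algebra_simps)
    also have "\<dots> = of_int B * z ^ j - of_nat p * (\<Sum>l<q. of_int (A ((l + q - j) mod q)) * z ^ l)"
      using j by (simp add: sum_subtractf sum_distrib_left)
    also have "\<dots> = 0" using row[OF j] p0 by simp
    finally show "(map_mat of_int N *\<^sub>v v) $ j = 0\<^sub>v q $ j" using j by simp
  qed (simp add: N_def)
  have v0: "v \<noteq> 0\<^sub>v q"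
  proof
    assume "v = 0\<^sub>v q"
    then have "v $ 0 = 0" using q_pos by simp
    then show False unfolding v_def using q_pos by simp
  qed
  have "det (map_mat (of_int :: int \<Rightarrow> complex) N) = 0"
  proof -
    have vc: "v \<in> carrier_vec q" unfolding v_def by simp
    have "map_mat (of_int :: int \<Rightarrow> complex) N \<in> carrier_mat q q" using Ncar by simp
    from det_0_iff_vec_prod_zero[OF this] show ?thesis using mv v0 vc by blast
  qed
  then have d0: "det N = 0" by simp
  have "[det N = B ^ q] (mod int p)"
  proof (rule det_cong_diag[OF Ncar])
    fix i j assume "i < q" "j < q" "i \<noteq> j"
    then show "int p dvd N $$ (i, j)" unfolding N_def by simp
  next
    fix i assume "i < q"
    then show "[N $$ (i, i) = B] (mod int p)" unfolding N_def
      by (simp add: cong_iff_dvd_diff)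
  qed
  then have "[B ^ q = 0] (mod int p)" using d0 by (simp add: cong_sym_eq)
  then have "int p dvd B ^ q" by (simp add: cong_0_iff)
  moreover have "prime (int p)" using p by simp
  ultimately have "int p dvd B" using prime_dvd_power by blast
  then show False using BA(1) by simp
qed

lemma t_not_unit: "1 / t \<notin> S"
proof
  assume it: "1 / t \<in> S"
  obtain u where u: "unit u" "of_nat p = t ^ ((p - 1) * p ^ (n - 1)) * u" using p_factor by blast
  have "1 < q" using p_gt1 n one_less_power[of p n] by simp
  then have "z ^ 1 \<noteq> 1" using zprim by blast
  then have t0: "t \<noteq> 0" by simp
  have "1 / of_nat p = (1 / t) ^ ((p - 1) * p ^ (n - 1)) * (1 / u)"
    using u(2) t0 unit_nz[OF u(1)] by (simp add: power_one_over)
  also have "\<dots> \<in> S" using it unit_inv[OF u(1)] by (intro S_mult S_power)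
  finally show False using inv_p_notin by simp
qed


lemma mo_mult:
  assumes "mat_over S A" "mat_over S B" "A \<in> carrier_mat n1 m" "B \<in> carrier_mat m k"
  shows "mat_over S (A * B)"
  unfolding mat_over_def
proof (intro allI impI)
  fix i j assume ij: "i < dim_row (A * B)" "j < dim_col (A * B)"
  have "(A * B) $$ (i, j) = (\<Sum>l\<in>{0..<m}. A $$ (i, l) * B $$ (l, j))"
    using ij assms(3,4) by (simp add: scalar_prod_def)
  also have "\<dots> \<in> S"
    using ij assms unfolding mat_over_def by (intro S_sum S_mult) auto
  finally show "(A * B) $$ (i, j) \<in> S" .
qed

lemma mo_one: "mat_over S (1\<^sub>m k)"
  unfolding mat_over_def using S_one S_zero by simp

lemma mo_smult: "c \<in> S \<Longrightarrow> mat_over S A \<Longrightarrow> mat_over S (c \<cdot>\<^sub>m A)"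
  unfolding mat_over_def using S_mult by simp

lemma det_S: assumes "mat_over S A" "A \<in> carrier_mat k k" shows "det A \<in> S"
proof -
  have "det A = (\<Sum>\<pi>\<in>{\<pi>. \<pi> permutes {0..<k}}. signof \<pi> * (\<Prod>i = 0..<k. A $$ (i, \<pi> i)))"
    by (rule det_def'[OF assms(2)])
  also have "\<dots> \<in> S"
  proof (intro S_sum S_mult S_prod)
    fix \<pi> assume "\<pi> \<in> {\<pi>. \<pi> permutes {0..<k}}"
    then have pi: "\<pi> permutes {0..<k}" by simp
    show "signof \<pi> \<in> S" unfolding sign_def using S_one S_uminus[OF S_one] by simp
    fix i assume "i \<in> {0..<k}"
    then have "i < k" "\<pi> i < k" using pi by (auto simp: permutes_in_image)
    then show "A $$ (i, \<pi> i) \<in> S" using assms unfolding mat_over_def by auto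
  qed
  finally show ?thesis .
qed

lemma adj_S: assumes "mat_over S A" "A \<in> carrier_mat k k" shows "mat_over S (adj_mat A)"
  unfolding mat_over_def
proof (intro allI impI)
  fix i j assume ij: "i < dim_row (adj_mat A)" "j < dim_col (adj_mat A)"
  then have ij': "i < k" "j < k" using assms(2) by (auto simp: adj_mat_def)
  have md: "mat_over S (mat_delete A j i)"
    unfolding mat_over_def mat_delete_def using assms ij' unfolding mat_over_def by auto
  have "mat_delete A j i \<in> carrier_mat (k - 1) (k - 1)" using mat_delete_carrier[OF assms(2)] by blast
  then have "det (mat_delete A j i) \<in> S" using det_S md by blast
  moreover have "(-1::complex) ^ (j + i) \<in> S" using S_power S_uminus[OF S_one] by blast
  ultimately have "cofactor A j i \<in> S" unfolding cofactor_def using S_mult by blast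
  then show "adj_mat A $$ (i, j) \<in> S" using ij' assms(2) by (simp add: adj_mat_def)
qed

lemma inv_over:
  assumes A: "A \<in> carrier_mat k k" and mo: "mat_over S A" and u: "unit (det A)"
  shows "invertible_over S k A"
proof -
  define A' where "A' = (1 / det A) \<cdot>\<^sub>m adj_mat A"
  have adj: "adj_mat A \<in> carrier_mat k k" "A * adj_mat A = det A \<cdot>\<^sub>m 1\<^sub>m k" "adj_mat A * A = det A \<cdot>\<^sub>m 1\<^sub>m k"
    using adj_mat[OF A] by auto
  have d0: "det A \<noteq> 0" using unit_nz[OF u] .
  have A'c: "A' \<in> carrier_mat k k" unfolding A'_def using adj by simp
  have "A * A' = (1 / det A) \<cdot>\<^sub>m (A * adj_mat A)" unfolding A'_def by (rule mult_smult_distrib[OF A adj(1)])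
  also have "\<dots> = 1\<^sub>m k" using d0 unfolding adj(2) by (intro eq_matI) auto
  finally have r: "A * A' = 1\<^sub>m k" .
  have "A' * A = (1 / det A) \<cdot>\<^sub>m (adj_mat A * A)" unfolding A'_def by (rule mult_smult_assoc_mat[OF adj(1) A])
  also have "\<dots> = 1\<^sub>m k" using d0 unfolding adj(3) by (intro eq_matI) auto
  finally have l: "A' * A = 1\<^sub>m k" .
  have "mat_over S A'" unfolding A'_def by (rule mo_smult[OF unit_inv[OF u] adj_S[OF mo A]])
  then show ?thesis unfolding invertible_over_def using A mo A'c r l by blast
qed

lemma inv_over_mult:
  assumes "invertible_over S k A" "invertible_over S k B"
  shows "invertible_over S k (A * B)"
proof -
  obtain A' where A: "A \<in> carrier_mat k k" "mat_over S A" "A' \<in> carrier_mat k k" "mat_over S A'" "A * A' = 1\<^sub>m k" "A' * A = 1\<^sub>m k"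
    using assms(1) unfolding invertible_over_def by blast
  obtain B' where B: "B \<in> carrier_mat k k" "mat_over S B" "B' \<in> carrier_mat k k" "mat_over S B'" "B * B' = 1\<^sub>m k" "B' * B = 1\<^sub>m k"
    using assms(2) unfolding invertible_over_def by blast
  have c: "A * B \<in> carrier_mat k k" "B' * A' \<in> carrier_mat k k" using A B by auto
  have e1: "A * B * (B' * A') = A * (B * (B' * A'))" using assoc_mult_mat[OF A(1) B(1) c(2)] .
  have e2: "B * (B' * A') = (B * B') * A'" using assoc_mult_mat[OF B(1) B(3) A(3)] by simp
  have e3: "(B * B') * A' = A'" using B(5) A(3) by simp
  have r: "A * B * (B' * A') = 1\<^sub>m k" unfolding e1 e2 e3 by (rule A(5))
  have f1: "B' * A' * (A * B) = B' * (A' * (A * B))" using assoc_mult_mat[OF B(3) A(3) c(1)] .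
  have f2: "A' * (A * B) = (A' * A) * B" using assoc_mult_mat[OF A(3) A(1) B(1)] by simp
  have f3: "(A' * A) * B = B" using A(6) B(1) by simp
  have l: "B' * A' * (A * B) = 1\<^sub>m k" unfolding f1 f2 f3 by (rule B(6))
  have "mat_over S (A * B)" by (rule mo_mult[OF A(2) B(2) A(1) B(1)])
  moreover have "mat_over S (B' * A')" by (rule mo_mult[OF B(4) A(4) B(3) A(3)])
  ultimately show ?thesis unfolding invertible_over_def using c r l by blast
qed

lemma inv_over_inv:
  assumes "invertible_over S k A"
  obtains A' where "invertible_over S k A'" "A * A' = 1\<^sub>m k" "A' * A = 1\<^sub>m k"
proof -
  obtain A' where A: "A \<in> carrier_mat k k" "mat_over S A" "A' \<in> carrier_mat k k" "mat_over S A'" "A * A' = 1\<^sub>m k" "A' * A = 1\<^sub>m k"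
    using assms unfolding invertible_over_def by blast
  have "invertible_over S k A'" unfolding invertible_over_def using A by blast
  then show thesis using that A by blast
qed

lemma det_unit_of_inv:
  assumes "invertible_over S k A" shows "unit (det A)"
proof -
  obtain A' where A: "A \<in> carrier_mat k k" "mat_over S A" "A' \<in> carrier_mat k k" "mat_over S A'" "A * A' = 1\<^sub>m k" "A' * A = 1\<^sub>m k"
    using assms unfolding invertible_over_def by blast
  have "det A * det A' = 1" using det_mult[OF A(1) A(3)] A(5) by simp
  then show ?thesis by (rule unit_intro[OF det_S[OF A(2) A(1)] det_S[OF A(4) A(3)]])
qed

abbreviation "r \<equiv> (p - 1) * p ^ (n - 1)"
abbreviation "UL \<equiv> cyc_units p n"

lemma UL_set: "set UL = {i. i < q \<and> \<not> p dvd i}" unfolding cyc_units_def by auto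
lemma UL_sorted: "sorted_wrt (<) UL" unfolding cyc_units_def by (intro sorted_wrt_filter) (simp add: sorted_wrt_upt)
lemma UL_distinct: "distinct UL" unfolding cyc_units_def by simp

lemma UL_length: "length UL = r"
proof -
  have "length UL = card (set UL)" using distinct_card[OF UL_distinct] by simp
  also have "set UL = Pset p q" unfolding UL_set Pset_def by simp
  finally have l: "length UL = card (Pset p q)" .
  define M where "M = {k. k < q \<and> p dvd k}"
  have qq: "q = p * p ^ (n - 1)" using n by (simp add: power_Suc[symmetric])
  have M: "M = (\<lambda>i. p * i) ` {..<p ^ (n - 1)}"
  proof
    show "M \<subseteq> (\<lambda>i. p * i) ` {..<p ^ (n - 1)}"
    proof
      fix k assume "k \<in> M"
      then obtain i where i: "k = p * i" "k < q" unfolding M_def by auto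
      then have "i < p ^ (n - 1)" using qq p_gt1 by simp
      then show "k \<in> (\<lambda>i. p * i) ` {..<p ^ (n - 1)}" using i by auto
    qed
    show "(\<lambda>i. p * i) ` {..<p ^ (n - 1)} \<subseteq> M"
      unfolding M_def using qq p_gt1 by auto
  qed
  have inj: "inj_on (\<lambda>i. p * i) {..<p ^ (n - 1)}" using p_gt1 by (intro inj_onI) simp
  have cM: "card M = p ^ (n - 1)" unfolding M using card_image[OF inj] by simp
  have un: "{..<q} = Pset p q \<union> M" unfolding Pset_def M_def by auto
  have dis: "Pset p q \<inter> M = {}" unfolding Pset_def M_def by auto
  have fM: "finite M" unfolding M_def by simp
  have "q = card (Pset p q \<union> M)" using un card_lessThan[of q] by simp
  also have "\<dots> = card (Pset p q) + card M" by (rule card_Un_disjoint[OF finite_Pset fM dis])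
  finally have "card (Pset p q) = q - p ^ (n - 1)" using cM by simp
  also have "\<dots> = r" using qq by (simp add: diff_mult_distrib)
  finally show ?thesis using l by simp
qed

lemma UL_nth: "a < r \<Longrightarrow> UL ! a < q \<and> \<not> p dvd UL ! a"
  using UL_set UL_length nth_mem by (metis (no_types, lifting) mem_Collect_eq)

lemma UL_less: "a < b \<Longrightarrow> b < r \<Longrightarrow> UL ! a < UL ! b"
  using UL_sorted UL_length by (simp add: sorted_wrt_nth_less)

lemma UL_le: "a \<le> b \<Longrightarrow> b < r \<Longrightarrow> UL ! a \<le> UL ! b"
  using UL_less by (cases "a = b") (auto simp: order.order_iff_strict)

lemma UL_Pset: assumes a: "a < r" shows "(\<lambda>b. UL ! b) ` {..<a} = Pset p (UL ! a)"
proof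
  show "(\<lambda>b. UL ! b) ` {..<a} \<subseteq> Pset p (UL ! a)"
  proof
    fix k assume "k \<in> (\<lambda>b. UL ! b) ` {..<a}"
    then obtain b where b: "b < a" "k = UL ! b" by auto
    then show "k \<in> Pset p (UL ! a)" using UL_less[OF b(1) a] UL_nth[of b] a unfolding Pset_def by auto
  qed
  show "Pset p (UL ! a) \<subseteq> (\<lambda>b. UL ! b) ` {..<a}"
  proof
    fix k assume k: "k \<in> Pset p (UL ! a)"
    then have "k < q" "\<not> p dvd k" using UL_nth[OF a] unfolding Pset_def by auto
    then have "k \<in> set UL" using UL_set by simp
    then obtain b where b: "b < r" "UL ! b = k" using UL_length by (auto simp: in_set_conv_nth)
    have "b < a"
    proof (rule ccontr)
      assume "\<not> b < a"
      then have "a \<le> b" by simp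
      then have "UL ! a \<le> UL ! b" by (rule UL_le[OF _ b(1)])
      then show False using k b unfolding Pset_def by simp
    qed
    then show "k \<in> (\<lambda>b. UL ! b) ` {..<a}" using b by auto
  qed
qed

lemma UL_inj: "inj_on (\<lambda>b. UL ! b) {..<r}"
  using UL_distinct UL_length by (intro inj_onI) (simp add: nth_eq_iff_index_eq)

lemma card_Pset_UL: assumes a: "a < r" shows "card (Pset p (UL ! a)) = a"
proof -
  have "inj_on (\<lambda>b. UL ! b) {..<a}" by (rule inj_on_subset[OF UL_inj]) (use a in auto)
  then show ?thesis using UL_Pset[OF a] card_image by fastforce
qed

lemma UL_index:
  assumes j: "j < q" "\<not> p dvd j"
  shows "Ncount p j - 1 < r \<and> UL ! (Ncount p j - 1) = j"
proof -
  have "j \<in> set UL" using UL_set j by simp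
  then obtain a where a: "a < r" "UL ! a = j" using UL_length by (auto simp: in_set_conv_nth)
  have "{i. i \<le> j \<and> \<not> p dvd i} = insert j (Pset p j)" using j unfolding Pset_def by auto
  then have "Ncount p j = card (Pset p j) + 1" unfolding Ncount_def by (simp add: Pset_def)
  then have "Ncount p j - 1 = a" using card_Pset_UL[OF a(1)] a(2) by simp
  then show ?thesis using a by simp
qed

section \<open>Newton basis and existence\<close>

lemma t_nz: "t \<noteq> 0"
proof -
  have "1 < q" using p_gt1 n one_less_power[of p n] by simp
  then have "z ^ 1 \<noteq> 1" using zprim by blast
  then show ?thesis by simp
qed

lemma diffprod:
  assumes xy: "x \<le> y" and y: "y < q"
  shows "\<exists>u. unit u \<and> (\<Prod>k\<in>Pset p x. (z ^ y - z ^ k)) = t ^ (Wt p x y) * u"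
proof -
  have "\<forall>k. \<exists>u. k \<in> Pset p x \<longrightarrow> unit u \<and> z ^ y - z ^ k = t ^ (p ^ multiplicity p (y - k)) * u"
  proof
    fix k
    show "\<exists>u. k \<in> Pset p x \<longrightarrow> unit u \<and> z ^ y - z ^ k = t ^ (p ^ multiplicity p (y - k)) * u"
    proof (cases "k \<in> Pset p x")
      case True
      then have k: "k < y" using xy unfolding Pset_def by simp
      then have m: "0 < y - k" "y - k < q" using y by auto
      obtain u where u: "unit u" "1 - z ^ (y - k) = t ^ (p ^ multiplicity p (y - k)) * u"
        using one_minus_zpow[OF m] by blast
      have "z ^ y = z ^ k * z ^ (y - k)" using k by (simp add: power_add[symmetric])
      then have "z ^ y - z ^ k = - (z ^ k) * (1 - z ^ (y - k))" by (simp add: algebra_simps)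
      also have "\<dots> = t ^ (p ^ multiplicity p (y - k)) * (- (z ^ k) * u)" using u(2) by simp
      finally have "z ^ y - z ^ k = t ^ (p ^ multiplicity p (y - k)) * (- (z ^ k) * u)" .
      moreover have "unit (- (z ^ k) * u)" using unit_mult[OF unit_uminus[OF unit_zpow] u(1)] .
      ultimately show ?thesis by blast
    qed simp
  qed
  from choice[OF this] obtain U where U0: "\<forall>k. k \<in> Pset p x \<longrightarrow> unit (U k) \<and> z ^ y - z ^ k = t ^ (p ^ multiplicity p (y - k)) * U k"
    by blast
  then have U: "\<And>k. k \<in> Pset p x \<Longrightarrow> unit (U k) \<and> z ^ y - z ^ k = t ^ (p ^ multiplicity p (y - k)) * U k"
    by blast
  have "(\<Prod>k\<in>Pset p x. (z ^ y - z ^ k)) = (\<Prod>k\<in>Pset p x. t ^ (p ^ multiplicity p (y - k)) * U k)"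
    using U by (intro prod.cong) auto
  also have "\<dots> = t ^ (Wt p x y) * (\<Prod>k\<in>Pset p x. U k)"
    unfolding Wt_def by (simp add: prod.distrib power_sum)
  finally show ?thesis using unit_prod[of "Pset p x" U] U by blast
qed

definition Bm :: "complex mat" where
  "Bm = mat r r (\<lambda>(a, c). \<Prod>k\<in>Pset p (UL ! c). (z ^ (UL ! a) - z ^ k))"
definition E :: "nat \<Rightarrow> nat" where "E c = Wt p (UL ! c) (UL ! c)"

lemma Bm_carrier: "Bm \<in> carrier_mat r r" unfolding Bm_def by simp

lemma Bm_zero: assumes "a < c" "c < r" shows "Bm $$ (a, c) = 0"
proof -
  have "UL ! a \<in> Pset p (UL ! c)" using UL_less[OF assms] UL_nth[of a] assms unfolding Pset_def by auto
  then have "(\<Prod>k\<in>Pset p (UL ! c). (z ^ (UL ! a) - z ^ k)) = 0"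
    by (intro prod_zero) auto
  then show ?thesis unfolding Bm_def using assms by simp
qed

lemma Bm_fact: assumes "c \<le> a" "a < r"
  shows "\<exists>u. unit u \<and> Bm $$ (a, c) = t ^ (Wt p (UL ! c) (UL ! a)) * u"
proof -
  have "UL ! c \<le> UL ! a" by (rule UL_le[OF assms])
  moreover have "UL ! a < q" using UL_nth[OF assms(2)] by simp
  ultimately obtain u where "unit u" "(\<Prod>k\<in>Pset p (UL ! c). (z ^ (UL ! a) - z ^ k)) = t ^ (Wt p (UL ! c) (UL ! a)) * u"
    using diffprod by blast
  then show ?thesis unfolding Bm_def using assms by auto
qed

lemma E_le_Wt: assumes "c \<le> a" "a < r" shows "E c \<le> Wt p (UL ! c) (UL ! a)"
  unfolding E_def
  by (rule Wt_mono[OF p_gt1 UL_le[OF assms]]) (use UL_nth assms in auto)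

lemma E_mono: assumes "a \<le> b" "b < r" shows "E a \<le> E b"
proof -
  have "E a \<le> Wt p (UL ! a) (UL ! b)" by (rule E_le_Wt[OF assms])
  also have "\<dots> \<le> Wt p (UL ! b) (UL ! b)"
    unfolding Wt_def
  proof (rule sum_mono2)
    show "Pset p (UL ! a) \<subseteq> Pset p (UL ! b)" using UL_le[OF assms] unfolding Pset_def by auto
  qed auto
  finally show ?thesis unfolding E_def .
qed

lemma u0_ex: "\<exists>u0. \<forall>c<r. unit (u0 c) \<and> Bm $$ (c, c) = t ^ (E c) * u0 c"
proof -
  have "\<forall>c. \<exists>u. c < r \<longrightarrow> unit u \<and> Bm $$ (c, c) = t ^ (E c) * u"
  proof
    fix c
    show "\<exists>u. c < r \<longrightarrow> unit u \<and> Bm $$ (c, c) = t ^ (E c) * u"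
    proof (cases "c < r")
      case True
      from Bm_fact[OF le_refl True] show ?thesis unfolding E_def by blast
    qed simp
  qed
  from choice[OF this] show ?thesis by simp
qed

definition u0 :: "nat \<Rightarrow> complex" where "u0 = (SOME u0. \<forall>c<r. unit (u0 c) \<and> Bm $$ (c, c) = t ^ (E c) * u0 c)"

lemma u0: "c < r \<Longrightarrow> unit (u0 c) \<and> Bm $$ (c, c) = t ^ (E c) * u0 c"
  using someI_ex[OF u0_ex] unfolding u0_def by blast

lemma Bm_diag_nz: "c < r \<Longrightarrow> Bm $$ (c, c) \<noteq> 0"
  using u0[of c] unit_nz t_nz by simp

definition Gm :: "complex mat" where
  "Gm = mat r r (\<lambda>(a, c). if c \<le> a then Bm $$ (a, c) / Bm $$ (c, c) else 0)"

definition Dm :: "complex mat" where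
  "Dm = mat r r (\<lambda>(a, b). if a = b then u0 a * t ^ (E a) else 0)"

lemma Gm_carrier: "Gm \<in> carrier_mat r r" unfolding Gm_def by simp

lemma Gm_S: "mat_over S Gm"
  unfolding mat_over_def
proof (intro allI impI)
  fix a c assume ac: "a < dim_row Gm" "c < dim_col Gm"
  then have ac: "a < r" "c < r" unfolding Gm_def by auto
  show "Gm $$ (a, c) \<in> S"
  proof (cases "c \<le> a")
    case True
    obtain u where u: "unit u" "Bm $$ (a, c) = t ^ (Wt p (UL ! c) (UL ! a)) * u" using Bm_fact[OF True ac(1)] by blast
    have le: "E c \<le> Wt p (UL ! c) (UL ! a)" by (rule E_le_Wt[OF True ac(1)])
    have "t ^ (Wt p (UL ! c) (UL ! a)) = t ^ (E c) * t ^ (Wt p (UL ! c) (UL ! a) - E c)"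
      using le by (simp add: power_add[symmetric])
    then have "Gm $$ (a, c) = t ^ (Wt p (UL ! c) (UL ! a) - E c) * (u / u0 c)"
      unfolding Gm_def using True ac u u0[OF ac(2)] t_nz unit_nz[of "u0 c"] by (simp add: field_simps)
    also have "\<dots> \<in> S"
      by (rule S_mult[OF S_power[OF S_diff[OF S_one S_z]] unit_S[OF unit_div[OF u(1) conjunct1[OF u0[OF ac(2)]]]]])
    finally show ?thesis .
  next
    case False
    then show ?thesis unfolding Gm_def using ac S_zero by simp
  qed
qed

lemma diag_mult:
  assumes "a < k" "b < dim_col B" "B \<in> carrier_mat k m"
  shows "(mat k k (\<lambda>(i, j). if i = j then d i else 0) * B) $$ (a, b) = d a * B $$ (a, b)"
proof -
  have "(mat k k (\<lambda>(i, j). if i = j then d i else 0) * B) $$ (a, b) = (\<Sum>l\<in>{0..<k}. (if a = l then d a else 0) * B $$ (l, b))"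
    using assms by (simp add: scalar_prod_def)
  also have "\<dots> = (\<Sum>l\<in>{0..<k}. if a = l then d a * B $$ (l, b) else 0)" by (rule sum.cong) auto
  also have "\<dots> = d a * B $$ (a, b)" using assms by simp
  finally show ?thesis .
qed

lemma mult_diag:
  assumes "a < dim_row B" "b < k" "B \<in> carrier_mat m k"
  shows "(B * mat k k (\<lambda>(i, j). if i = j then d i else 0)) $$ (a, b) = B $$ (a, b) * d b"
proof -
  have "(B * mat k k (\<lambda>(i, j). if i = j then d i else 0)) $$ (a, b) = (\<Sum>l\<in>{0..<k}. B $$ (a, l) * (if l = b then d l else 0))"
    using assms by (simp add: scalar_prod_def)
  also have "\<dots> = (\<Sum>l\<in>{0..<k}. if l = b then B $$ (a, l) * d b else 0)" by (rule sum.cong) auto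
  also have "\<dots> = B $$ (a, b) * d b" using assms by simp
  finally show ?thesis .
qed

lemma Gm_Dm: "Gm * Dm = Bm"
proof (rule eq_matI)
  fix a c assume ac: "a < dim_row Bm" "c < dim_col Bm"
  then have ac: "a < r" "c < r" unfolding Bm_def by auto
  have "(Gm * Dm) $$ (a, c) = Gm $$ (a, c) * (u0 c * t ^ (E c))"
    unfolding Dm_def using ac Gm_carrier by (subst mult_diag) auto
  also have "\<dots> = Bm $$ (a, c)"
  proof (cases "c \<le> a")
    case True
    have "u0 c * t ^ (E c) = Bm $$ (c, c)" using u0[OF ac(2)] by simp
    then show ?thesis unfolding Gm_def using True ac Bm_diag_nz[OF ac(2)] by simp
  next
    case False
    then show ?thesis unfolding Gm_def using ac Bm_zero[of a c] by simp
  qed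
  finally show "(Gm * Dm) $$ (a, c) = Bm $$ (a, c)" .
qed (auto simp: Gm_def Dm_def Bm_def)

lemma Gm_det: "det Gm = 1"
proof -
  have "det Gm = prod_list (diag_mat Gm)"
    by (rule det_lower_triangular[OF _ Gm_carrier]) (auto simp: Gm_def)
  also have "\<dots> = (\<Prod>i = 0..<r. Gm $$ (i, i))" by (simp add: prod_list_diag_prod Gm_def)
  also have "\<dots> = 1" using Bm_diag_nz by (intro prod.neutral) (auto simp: Gm_def)
  finally show ?thesis .
qed

definition NP :: "nat \<Rightarrow> complex poly" where "NP c = (\<Prod>k\<in>Pset p (UL ! c). [:-(z ^ k), 1:])"

lemma NP_degree: "c < r \<Longrightarrow> degree (NP c) = c"
  unfolding NP_def by (subst degree_prod_sum_eq) (auto simp: card_Pset_UL)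

lemma NP_lead: "lead_coeff (NP c) = 1"
  unfolding NP_def by (simp add: lead_coeff_prod)

lemma coeff_mult_S: assumes "\<forall>i. coeff P i \<in> S" "\<forall>i. coeff Q i \<in> S" shows "\<forall>i. coeff (P * Q) i \<in> S"
  using assms by (auto simp: coeff_mult intro!: S_sum S_mult)

lemma prod_lin_S: "finite K \<Longrightarrow> \<forall>i. coeff (\<Prod>k\<in>K. [:-(z ^ k), 1:]) i \<in> S"
proof (induction K rule: finite_induct)
  case empty
  show ?case
  proof
    fix i show "coeff (\<Prod>k\<in>{}. [:-(z ^ k), 1:]) i \<in> S" using S_one S_zero by (cases i) auto
  qed
next
  case (insert x F)
  have l: "\<forall>i. coeff [:-(z ^ x), 1:] i \<in> S"
  proof
    fix i show "coeff [:-(z ^ x), 1:] i \<in> S"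
      using S_one S_zero S_uminus[OF S_zpow[of x]] by (cases i; cases "i - 1") (auto simp: coeff_pCons)
  qed
  show ?case using coeff_mult_S[OF l insert.IH] insert.hyps(1,2) by simp
qed

lemma NP_S: "\<forall>i. coeff (NP c) i \<in> S"
  unfolding NP_def by (rule prod_lin_S) simp


definition Vm :: "complex mat" where "Vm = mat r r (\<lambda>(m, c). coeff (NP c) m)"
abbreviation "Am \<equiv> dedekind_mat p n z"

lemma Am_carrier: "Am \<in> carrier_mat r r" unfolding dedekind_mat_def by simp
lemma Vm_carrier: "Vm \<in> carrier_mat r r" unfolding Vm_def by simp

lemma Vm_S: "mat_over S Vm" unfolding mat_over_def Vm_def using NP_S by simp

lemma Vm_det: "det Vm = 1"
proof -
  have ut: "upper_triangular Vm"
    unfolding upper_triangular_def Vm_def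
  proof (intro allI impI)
    fix i j assume ij: "i < dim_row (mat r r (\<lambda>(m, c). coeff (NP c) m))" "j < i"
    then have "i < r" "j < r" by auto
    then show "mat r r (\<lambda>(m, c). coeff (NP c) m) $$ (i, j) = 0"
      using ij NP_degree[of j] by (simp add: coeff_eq_0)
  qed
  have "det Vm = prod_list (diag_mat Vm)" by (rule det_upper_triangular[OF ut Vm_carrier])
  also have "\<dots> = (\<Prod>i = 0..<r. Vm $$ (i, i))" by (simp add: prod_list_diag_prod Vm_def)
  also have "\<dots> = 1"
  proof (intro prod.neutral ballI)
    fix i assume "i \<in> {0..<r}"
    then have "i < r" by simp
    then show "Vm $$ (i, i) = 1" unfolding Vm_def using NP_lead[of i] NP_degree[of i] by simp
  qed
  finally show ?thesis .
qed

lemma Am_Vm: "Am * Vm = Bm"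
proof (rule eq_matI)
  fix a c assume ac: "a < dim_row Bm" "c < dim_col Bm"
  then have ac: "a < r" "c < r" unfolding Bm_def by auto
  define x where "x = z ^ (UL ! a)"
  have "(Am * Vm) $$ (a, c) = (\<Sum>m\<in>{0..<r}. z ^ (UL ! a * m) * coeff (NP c) m)"
    using ac unfolding dedekind_mat_def Vm_def by (simp add: scalar_prod_def)
  also have "\<dots> = (\<Sum>m\<in>{0..<r}. coeff (NP c) m * x ^ m)"
    unfolding x_def by (intro sum.cong) (auto simp: power_mult)
  also have "\<dots> = (\<Sum>m\<le>degree (NP c). coeff (NP c) m * x ^ m)"
  proof (rule sum.mono_neutral_right)
    show "{..degree (NP c)} \<subseteq> {0..<r}" using NP_degree[OF ac(2)] ac by auto
    show "\<forall>i\<in>{0..<r} - {..degree (NP c)}. coeff (NP c) i * x ^ i = 0"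
      by (auto simp: coeff_eq_0)
  qed simp
  also have "\<dots> = poly (NP c) x" by (simp add: poly_altdef)
  also have "\<dots> = (\<Prod>k\<in>Pset p (UL ! c). (x - z ^ k))" unfolding NP_def by (simp add: poly_prod)
  also have "\<dots> = Bm $$ (a, c)" unfolding Bm_def x_def using ac by simp
  finally show "(Am * Vm) $$ (a, c) = Bm $$ (a, c)" .
qed (auto simp: Bm_def dedekind_mat_def Vm_def)

lemma existence: "elem_div_exps S t r Am E"
proof -
  have Gi: "invertible_over S r Gm" by (rule inv_over[OF Gm_carrier Gm_S]) (simp add: Gm_det unit_one)
  obtain Gi where G: "invertible_over S r Gi" "Gm * Gi = 1\<^sub>m r" "Gi * Gm = 1\<^sub>m r"
    using inv_over_inv[OF Gi] by blast
  have Gic: "Gi \<in> carrier_mat r r" using G(1) unfolding invertible_over_def by blast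
  have Vi: "invertible_over S r Vm" by (rule inv_over[OF Vm_carrier Vm_S]) (simp add: Vm_det unit_one)
  have Dmc: "Dm \<in> carrier_mat r r" unfolding Dm_def by simp
  have "Gi * Am * Vm = Gi * (Am * Vm)" using assoc_mult_mat[OF Gic Am_carrier Vm_carrier] .
  also have "\<dots> = Gi * (Gm * Dm)" by (simp add: Am_Vm Gm_Dm)
  also have "\<dots> = (Gi * Gm) * Dm" using assoc_mult_mat[OF Gic Gm_carrier Dmc] by simp
  also have "\<dots> = Dm" using G(3) Dmc by simp
  finally have eq: "Gi * Am * Vm = mat r r (\<lambda>(a, b). if a = b then u0 a * t ^ E a else 0)"
    unfolding Dm_def .
  have mono: "\<forall>a b. a \<le> b \<longrightarrow> b < r \<longrightarrow> E a \<le> E b" using E_mono by blast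
  have units: "\<forall>a<r. unit_in S (u0 a)" using u0 unfolding unit_def by blast
  show ?thesis unfolding elem_div_exps_def using mono G(1) Vi units eq by blast
qed

section \<open>Uniqueness\<close>

definition diagm :: "(nat \<Rightarrow> complex) \<Rightarrow> (nat \<Rightarrow> nat) \<Rightarrow> complex mat" where
  "diagm u e = mat r r (\<lambda>(a, b). if a = b then u a * t ^ e a else 0)"
definition sm :: "(nat \<Rightarrow> nat) \<Rightarrow> nat \<Rightarrow> nat" where "sm e m = (\<Sum>a<r. min (e a) m)"

lemma diagm_carrier: "diagm u e \<in> carrier_mat r r" unfolding diagm_def by simp

lemma det_diag: fixes d :: "nat \<Rightarrow> complex" shows "det (mat k k (\<lambda>(a, b). if a = b then d a else 0)) = (\<Prod>a<k. d a)"
proof -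
  have ut: "upper_triangular (mat k k (\<lambda>(a, b). if a = b then d a else (0::complex)))"
    unfolding upper_triangular_def by auto
  have "det (mat k k (\<lambda>(a, b). if a = b then d a else 0)) = prod_list (diag_mat (mat k k (\<lambda>(a, b). if a = b then d a else (0::complex))))"
    by (rule det_upper_triangular[OF ut mat_carrier])
  also have "\<dots> = (\<Prod>a = 0..<k. d a)" by (simp add: prod_list_diag_prod)
  finally show ?thesis by (simp add: atLeast0LessThan)
qed

lemma K_lower:
  assumes u: "\<forall>a<r. unit (u a)" and X: "X \<in> carrier_mat r r" "mat_over S X"
    and Y: "Y \<in> carrier_mat r r" "mat_over S Y"
  shows "\<exists>s\<in>S. det (diagm u e * X + t ^ m \<cdot>\<^sub>m Y) = t ^ sm e m * s"
proof -
  define Dt where "Dt = mat r r (\<lambda>(a, b). if a = b then t ^ min (e a) m else 0)"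
  define Z where "Z = mat r r (\<lambda>(a, b). u a * t ^ (e a - min (e a) m) * X $$ (a, b) + t ^ (m - min (e a) m) * Y $$ (a, b))"
  have Zc: "Z \<in> carrier_mat r r" unfolding Z_def by simp
  have Dtc: "Dt \<in> carrier_mat r r" unfolding Dt_def by simp
  have tS: "t \<in> S" by (rule S_diff[OF S_one S_z])
  have ZS: "mat_over S Z"
    unfolding mat_over_def
  proof (intro allI impI)
    fix a b assume ab: "a < dim_row Z" "b < dim_col Z"
    then have ab: "a < r" "b < r" unfolding Z_def by auto
    have xs: "X $$ (a, b) \<in> S" using X ab unfolding mat_over_def by auto
    have ys: "Y $$ (a, b) \<in> S" using Y ab unfolding mat_over_def by auto
    have us: "u a \<in> S" using u ab unit_S by blast
    have "u a * t ^ (e a - min (e a) m) * X $$ (a, b) + t ^ (m - min (e a) m) * Y $$ (a, b) \<in> S"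
      by (rule S_add[OF S_mult[OF S_mult[OF us S_power[OF tS]] xs] S_mult[OF S_power[OF tS] ys]])
    then show "Z $$ (a, b) \<in> S" unfolding Z_def using ab by simp
  qed
  have eq: "Dt * Z = diagm u e * X + t ^ m \<cdot>\<^sub>m Y"
  proof (rule eq_matI)
    fix a b assume ab: "a < dim_row (diagm u e * X + t ^ m \<cdot>\<^sub>m Y)" "b < dim_col (diagm u e * X + t ^ m \<cdot>\<^sub>m Y)"
    then have ab: "a < r" "b < r" using X Y by (auto simp: diagm_def)
    have "(Dt * Z) $$ (a, b) = t ^ min (e a) m * Z $$ (a, b)"
      unfolding Dt_def using ab Zc by (subst diag_mult) auto
    also have "\<dots> = u a * (t ^ min (e a) m * t ^ (e a - min (e a) m)) * X $$ (a, b) + (t ^ min (e a) m * t ^ (m - min (e a) m)) * Y $$ (a, b)"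
      unfolding Z_def using ab by (simp add: algebra_simps)
    also have "\<dots> = u a * t ^ e a * X $$ (a, b) + t ^ m * Y $$ (a, b)"
      by (simp add: power_add[symmetric])
    also have "\<dots> = (diagm u e * X + t ^ m \<cdot>\<^sub>m Y) $$ (a, b)"
    proof -
      have "(diagm u e * X) $$ (a, b) = u a * t ^ e a * X $$ (a, b)"
        unfolding diagm_def by (rule diag_mult) (use ab X in auto)
      then show ?thesis using ab X Y by simp
    qed
    finally show "(Dt * Z) $$ (a, b) = (diagm u e * X + t ^ m \<cdot>\<^sub>m Y) $$ (a, b)" .
  qed (use X Y in \<open>auto simp: Dt_def Z_def diagm_def\<close>)
  have "det (diagm u e * X + t ^ m \<cdot>\<^sub>m Y) = det Dt * det Z" unfolding eq[symmetric] by (rule det_mult[OF Dtc Zc])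
  also have "det Dt = (\<Prod>a<r. t ^ min (e a) m)" unfolding Dt_def by (rule det_diag)
  also have "\<dots> = t ^ sm e m" unfolding sm_def by (simp add: power_sum)
  finally show ?thesis using det_S[OF ZS Zc] by blast
qed

lemma K_achieve:
  assumes u: "\<forall>a<r. unit (u a)"
  shows "\<exists>X Y w. X \<in> carrier_mat r r \<and> mat_over S X \<and> Y \<in> carrier_mat r r \<and> mat_over S Y \<and> unit w
     \<and> det (diagm u e * X + t ^ m \<cdot>\<^sub>m Y) = t ^ sm e m * w"
proof -
  define X where "X = mat r r (\<lambda>(a, b). if a = b \<and> e a \<le> m then 1 else (0::complex))"
  define Y where "Y = mat r r (\<lambda>(a, b). if a = b \<and> \<not> e a \<le> m then 1 else (0::complex))"
  define w where "w = (\<lambda>a. if e a \<le> m then u a else 1)"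
  have Xc: "X \<in> carrier_mat r r" "mat_over S X" unfolding X_def mat_over_def using S_one S_zero by auto
  have Yc: "Y \<in> carrier_mat r r" "mat_over S Y" unfolding Y_def mat_over_def using S_one S_zero by auto
  have eq: "diagm u e * X + t ^ m \<cdot>\<^sub>m Y = mat r r (\<lambda>(a, b). if a = b then t ^ min (e a) m * w a else 0)"
  proof (rule eq_matI)
    fix a b assume ab: "a < dim_row (mat r r (\<lambda>(a, b). if a = b then t ^ min (e a) m * w a else 0))"
      "b < dim_col (mat r r (\<lambda>(a, b). if a = b then t ^ min (e a) m * w a else 0))"
    then have ab: "a < r" "b < r" by auto
    have "(diagm u e * X + t ^ m \<cdot>\<^sub>m Y) $$ (a, b) = u a * t ^ e a * X $$ (a, b) + t ^ m * Y $$ (a, b)"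
    proof -
      have "(diagm u e * X) $$ (a, b) = u a * t ^ e a * X $$ (a, b)"
        unfolding diagm_def by (rule diag_mult) (use ab Xc in auto)
      then show ?thesis using ab Xc Yc by simp
    qed
    also have "\<dots> = (if a = b then t ^ min (e a) m * w a else 0)"
      unfolding X_def Y_def w_def using ab by auto
    finally show "(diagm u e * X + t ^ m \<cdot>\<^sub>m Y) $$ (a, b) = mat r r (\<lambda>(a, b). if a = b then t ^ min (e a) m * w a else 0) $$ (a, b)"
      using ab by simp
  qed (use Xc Yc in \<open>auto simp: diagm_def\<close>)
  have "det (diagm u e * X + t ^ m \<cdot>\<^sub>m Y) = (\<Prod>a<r. t ^ min (e a) m * w a)" unfolding eq by (rule det_diag)
  also have "\<dots> = t ^ sm e m * (\<Prod>a<r. w a)" unfolding sm_def by (simp add: prod.distrib power_sum)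
  finally have d: "det (diagm u e * X + t ^ m \<cdot>\<^sub>m Y) = t ^ sm e m * (\<Prod>a<r. w a)" .
  have "unit (\<Prod>a<r. w a)" using u unfolding w_def by (intro unit_prod) (auto simp: unit_one)
  then show ?thesis using Xc Yc d by blast
qed

lemma K_transfer:
  assumes P: "invertible_over S r P" and Q: "invertible_over S r Q" and D1: "D1 \<in> carrier_mat r r"
    and D2: "D2 = P * D1 * Q"
    and low: "\<And>X Y. X \<in> carrier_mat r r \<Longrightarrow> mat_over S X \<Longrightarrow> Y \<in> carrier_mat r r \<Longrightarrow> mat_over S Y \<Longrightarrow>
       \<exists>s\<in>S. det (D1 * X + t ^ m \<cdot>\<^sub>m Y) = t ^ k * s"
    and X: "X \<in> carrier_mat r r" "mat_over S X" and Y: "Y \<in> carrier_mat r r" "mat_over S Y"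
  shows "\<exists>s\<in>S. det (D2 * X + t ^ m \<cdot>\<^sub>m Y) = t ^ k * s"
proof -
  obtain P' where P': "P \<in> carrier_mat r r" "mat_over S P" "P' \<in> carrier_mat r r" "mat_over S P'" "P * P' = 1\<^sub>m r" "P' * P = 1\<^sub>m r"
    using P unfolding invertible_over_def by blast
  have Qc: "Q \<in> carrier_mat r r" "mat_over S Q" using Q unfolding invertible_over_def by auto
  have QX: "Q * X \<in> carrier_mat r r" "mat_over S (Q * X)" using Qc X mo_mult[OF Qc(2) X(2) Qc(1) X(1)] by auto
  have PY: "P' * Y \<in> carrier_mat r r" "mat_over S (P' * Y)" using P' Y mo_mult[OF P'(4) Y(2) P'(3) Y(1)] by auto
  have c1: "D1 * (Q * X) \<in> carrier_mat r r" using D1 QX by simp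
  have c2: "t ^ m \<cdot>\<^sub>m (P' * Y) \<in> carrier_mat r r" using PY by simp
  have e1: "P * (D1 * (Q * X)) = D2 * X"
  proof -
    have "D1 * (Q * X) = D1 * Q * X" using assoc_mult_mat[OF D1 Qc(1) X(1)] by simp
    then have "P * (D1 * (Q * X)) = P * (D1 * Q * X)" by simp
    also have "\<dots> = P * (D1 * Q) * X" using assoc_mult_mat[OF P'(1) _ X(1), of "D1 * Q"] D1 Qc by simp
    also have "\<dots> = P * D1 * Q * X" using assoc_mult_mat[OF P'(1) D1 Qc(1)] by simp
    finally show ?thesis unfolding D2 .
  qed
  have e2: "P * (t ^ m \<cdot>\<^sub>m (P' * Y)) = t ^ m \<cdot>\<^sub>m Y"
  proof -
    have "P * (t ^ m \<cdot>\<^sub>m (P' * Y)) = t ^ m \<cdot>\<^sub>m (P * (P' * Y))" by (rule mult_smult_distrib[OF P'(1) PY(1)])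
    also have "P * (P' * Y) = (P * P') * Y" using assoc_mult_mat[OF P'(1) P'(3) Y(1)] by simp
    also have "\<dots> = Y" using P'(5) Y(1) by simp
    finally show ?thesis .
  qed
  have "P * (D1 * (Q * X) + t ^ m \<cdot>\<^sub>m (P' * Y)) = P * (D1 * (Q * X)) + P * (t ^ m \<cdot>\<^sub>m (P' * Y))"
    by (rule mult_add_distrib_mat[OF P'(1) c1 c2])
  also have "\<dots> = D2 * X + t ^ m \<cdot>\<^sub>m Y" unfolding e1 e2 ..
  finally have eq: "D2 * X + t ^ m \<cdot>\<^sub>m Y = P * (D1 * (Q * X) + t ^ m \<cdot>\<^sub>m (P' * Y))" by simp
  obtain s where s: "s \<in> S" "det (D1 * (Q * X) + t ^ m \<cdot>\<^sub>m (P' * Y)) = t ^ k * s"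
    using low[OF QX PY] by blast
  have "det (D2 * X + t ^ m \<cdot>\<^sub>m Y) = det P * det (D1 * (Q * X) + t ^ m \<cdot>\<^sub>m (P' * Y))"
    unfolding eq by (rule det_mult[OF P'(1)]) (use c1 c2 in simp)
  also have "\<dots> = t ^ k * (det P * s)" using s by simp
  finally show ?thesis using S_mult[OF det_S[OF P'(2) P'(1)] s(1)] by blast
qed

lemma K_ineq:
  assumes w: "unit w" and s: "s \<in> S" and eq: "t ^ a * w = t ^ b * s"
  shows "b \<le> a"
proof (rule ccontr)
  assume "\<not> b \<le> a"
  then have ab: "b = a + Suc (b - a - 1)" by simp
  have "t ^ a * w = t ^ a * (t * (t ^ (b - a - 1) * s))" using eq ab by (metis power_add power_Suc mult.assoc)
  then have "w = t * (t ^ (b - a - 1) * s)" using t_nz by simp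
  then have "1 / t = t ^ (b - a - 1) * s * (1 / w)" using t_nz unit_nz[OF w] by (simp add: field_simps)
  also have "\<dots> \<in> S" by (rule S_mult[OF S_mult[OF S_power[OF S_diff[OF S_one S_z]] s] unit_inv[OF w]])
  finally show False using t_not_unit by simp
qed

lemma sm_le:
  assumes u1: "\<forall>a<r. unit (u1 a)" and u2: "\<forall>a<r. unit (u2 a)"
    and P: "invertible_over S r P" and Q: "invertible_over S r Q"
    and D: "diagm u2 f = P * diagm u1 e * Q"
  shows "sm e m \<le> sm f m"
proof -
  obtain X Y w where XY: "X \<in> carrier_mat r r" "mat_over S X" "Y \<in> carrier_mat r r" "mat_over S Y" "unit w"
     "det (diagm u2 f * X + t ^ m \<cdot>\<^sub>m Y) = t ^ sm f m * w"
    using K_achieve[OF u2, of f m] by blast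
  obtain s where s: "s \<in> S" "det (diagm u2 f * X + t ^ m \<cdot>\<^sub>m Y) = t ^ sm e m * s"
    using K_transfer[OF P Q diagm_carrier D K_lower[OF u1] XY(1-4)] by blast
  show ?thesis using K_ineq[OF XY(5) s(1)] XY(6) s(2) by simp
qed

lemma sm_Suc: "sm e (Suc m) = sm e m + card {a\<in>{..<r}. m < e a}"
proof -
  have "sm e (Suc m) = (\<Sum>a<r. min (e a) m + (if m < e a then 1 else 0))"
    unfolding sm_def by (intro sum.cong) auto
  also have "\<dots> = sm e m + (\<Sum>a<r. if m < e a then 1 else 0)" unfolding sm_def by (simp add: sum.distrib)
  also have "(\<Sum>a<r. if m < e a then 1 else 0) = card {a\<in>{..<r}. m < e a}" using sum_if_card[of "{..<r}" "\<lambda>a. m < e a" 1] by simp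
  finally show ?thesis .
qed

lemma comb_side:
  fixes e f :: "nat \<Rightarrow> nat"
  assumes e: "\<forall>a b. a \<le> b \<longrightarrow> b < r \<longrightarrow> e a \<le> e b" and f: "\<forall>a b. a \<le> b \<longrightarrow> b < r \<longrightarrow> f a \<le> f b"
    and cnt: "\<And>m. card {a\<in>{..<r}. m < e a} = card {a\<in>{..<r}. m < f a}"
    and a: "a < r" and lt: "e a < f a"
  shows False
proof -
  have s1: "{b\<in>{..<r}. e a < e b} \<subseteq> {a<..<r}"
  proof
    fix b assume b: "b \<in> {b\<in>{..<r}. e a < e b}"
    have "\<not> b \<le> a"
    proof
      assume "b \<le> a"
      then have "e b \<le> e a" using e a by blast
      then show False using b by auto
    qed
    then show "b \<in> {a<..<r}" using b by auto
  qed
  have s2: "{a..<r} \<subseteq> {b\<in>{..<r}. e a < f b}"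
  proof
    fix b assume b: "b \<in> {a..<r}"
    then have "f a \<le> f b" using f by auto
    then show "b \<in> {b\<in>{..<r}. e a < f b}" using b lt by auto
  qed
  have "r - a = card {a..<r}" by simp
  also have "\<dots> \<le> card {b\<in>{..<r}. e a < f b}" by (rule card_mono[OF _ s2]) simp
  also have "\<dots> = card {b\<in>{..<r}. e a < e b}" using cnt by simp
  also have "\<dots> \<le> card {a<..<r}" by (rule card_mono[OF _ s1]) simp
  also have "\<dots> = r - Suc a" by simp
  finally show False using a by simp
qed

lemma comb_eq:
  fixes e f :: "nat \<Rightarrow> nat"
  assumes e: "\<forall>a b. a \<le> b \<longrightarrow> b < r \<longrightarrow> e a \<le> e b" and f: "\<forall>a b. a \<le> b \<longrightarrow> b < r \<longrightarrow> f a \<le> f b"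
    and sm: "\<And>m. sm e m = sm f m"
  shows "\<forall>a<r. e a = f a"
proof (intro allI impI)
  fix a assume a: "a < r"
  have cnt: "card {a\<in>{..<r}. m < e a} = card {a\<in>{..<r}. m < f a}" for m
    using sm_Suc[of e m] sm_Suc[of f m] sm[of m] sm[of "Suc m"] by simp
  show "e a = f a"
  proof (rule ccontr)
    assume "e a \<noteq> f a"
    then consider "e a < f a" | "f a < e a" by linarith
    then show False
    proof cases
      case 1 then show False using comb_side[OF e f cnt a] by blast
    next
      case 2 then show False using comb_side[OF f e cnt[symmetric] a] by blast
    qed
  qed
qed

lemma massoc: "A \<in> carrier_mat r r \<Longrightarrow> B \<in> carrier_mat r r \<Longrightarrow> C \<in> carrier_mat r r \<Longrightarrow> A * B * C = A * (B * C)"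
  by (rule assoc_mult_mat)
lemma mcar: "A \<in> carrier_mat r r \<Longrightarrow> B \<in> carrier_mat r r \<Longrightarrow> A * B \<in> carrier_mat r r"
  by simp

lemma assoc5:
  assumes A: "A \<in> carrier_mat r r" and B: "B \<in> carrier_mat r r" and C: "C \<in> carrier_mat r r"
    and D: "D \<in> carrier_mat r r" and F: "F \<in> carrier_mat r r"
  shows "A * (B * C * D) * F = (A * B) * C * (D * F)"
proof -
  have BC: "B * C \<in> carrier_mat r r" using mcar[OF B C] .
  have BCD: "B * C * D \<in> carrier_mat r r" using mcar[OF BC D] .
  have DF: "D * F \<in> carrier_mat r r" using mcar[OF D F] .
  have CDF: "C * (D * F) \<in> carrier_mat r r" using mcar[OF C DF] .
  have AB: "A * B \<in> carrier_mat r r" using mcar[OF A B] .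
  have "A * (B * C * D) * F = A * ((B * C * D) * F)" by (rule massoc[OF A BCD F])
  also have "(B * C * D) * F = (B * C) * (D * F)" by (rule massoc[OF BC D F])
  also have "\<dots> = B * (C * (D * F))" by (rule massoc[OF B C DF])
  also have "A * (B * (C * (D * F))) = (A * B) * (C * (D * F))" by (rule massoc[OF A B CDF, symmetric])
  also have "\<dots> = (A * B) * C * (D * F)" by (rule massoc[OF AB C DF, symmetric])
  finally show ?thesis .
qed

lemma unique_exps:
  assumes de: "elem_div_exps S t r Am e" and df: "elem_div_exps S t r Am f"
  shows "\<forall>a<r. e a = f a"
proof -
  have de': "(\<forall>a b. a \<le> b \<longrightarrow> b < r \<longrightarrow> e a \<le> e b) \<and> (\<exists>U V u. invertible_over S r U \<and> invertible_over S r V \<and> (\<forall>a<r. unit_in S (u a)) \<and> U * Am * V = diagm u e)"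
    using de unfolding elem_div_exps_def diagm_def .
  have df': "(\<forall>a b. a \<le> b \<longrightarrow> b < r \<longrightarrow> f a \<le> f b) \<and> (\<exists>U V u. invertible_over S r U \<and> invertible_over S r V \<and> (\<forall>a<r. unit_in S (u a)) \<and> U * Am * V = diagm u f)"
    using df unfolding elem_div_exps_def diagm_def .
  obtain U1 V1 u1 where E1': "invertible_over S r U1" "invertible_over S r V1"
    "\<forall>a<r. unit_in S (u1 a)" "U1 * Am * V1 = diagm u1 e"
    using de'[THEN conjunct2] by blast
  obtain U2 V2 u2 where E2': "invertible_over S r U2" "invertible_over S r V2"
    "\<forall>a<r. unit_in S (u2 a)" "U2 * Am * V2 = diagm u2 f"
    using df'[THEN conjunct2] by blast
  note E1 = de'[THEN conjunct1] E1'
  note E2 = df'[THEN conjunct1] E2'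
  have u1: "\<forall>a<r. unit (u1 a)" using E1(4) unfolding unit_def by blast
  have u2: "\<forall>a<r. unit (u2 a)" using E2(4) unfolding unit_def by blast
  obtain U1' where U1': "invertible_over S r U1'" "U1 * U1' = 1\<^sub>m r" "U1' * U1 = 1\<^sub>m r" using inv_over_inv[OF E1(2)] by blast
  obtain V1' where V1': "invertible_over S r V1'" "V1 * V1' = 1\<^sub>m r" "V1' * V1 = 1\<^sub>m r" using inv_over_inv[OF E1(3)] by blast
  obtain U2' where U2': "invertible_over S r U2'" "U2 * U2' = 1\<^sub>m r" "U2' * U2 = 1\<^sub>m r" using inv_over_inv[OF E2(2)] by blast
  obtain V2' where V2': "invertible_over S r V2'" "V2 * V2' = 1\<^sub>m r" "V2' * V2 = 1\<^sub>m r" using inv_over_inv[OF E2(3)] by blast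
  have c: "U1 \<in> carrier_mat r r" "V1 \<in> carrier_mat r r" "U2 \<in> carrier_mat r r" "V2 \<in> carrier_mat r r"
    "U1' \<in> carrier_mat r r" "V1' \<in> carrier_mat r r" "U2' \<in> carrier_mat r r" "V2' \<in> carrier_mat r r"
    using E1 E2 U1' V1' U2' V2' unfolding invertible_over_def by blast+
  have A1: "Am = U1' * diagm u1 e * V1'"
  proof -
    have "U1' * diagm u1 e * V1' = U1' * (U1 * Am * V1) * V1'" using E1(5) by simp
    also have "\<dots> = (U1' * U1) * Am * (V1 * V1')" by (rule assoc5[OF c(5) c(1) Am_carrier c(2) c(6)])
    also have "\<dots> = Am" using U1'(3) V1'(2) Am_carrier by simp
    finally show ?thesis by simp
  qed
  have A2: "Am = U2' * diagm u2 f * V2'"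
  proof -
    have "U2' * diagm u2 f * V2' = U2' * (U2 * Am * V2) * V2'" using E2(5) by simp
    also have "\<dots> = (U2' * U2) * Am * (V2 * V2')" by (rule assoc5[OF c(7) c(3) Am_carrier c(4) c(8)])
    also have "\<dots> = Am" using U2'(3) V2'(2) Am_carrier by simp
    finally show ?thesis by simp
  qed
  have D21: "diagm u2 f = (U2 * U1') * diagm u1 e * (V1' * V2)"
  proof -
    have "diagm u2 f = U2 * (U1' * diagm u1 e * V1') * V2" using E2(5) A1 by simp
    also have "\<dots> = (U2 * U1') * diagm u1 e * (V1' * V2)" by (rule assoc5[OF c(3) c(5) diagm_carrier c(6) c(4)])
    finally show ?thesis .
  qed
  have D12: "diagm u1 e = (U1 * U2') * diagm u2 f * (V2' * V1)"
  proof -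
    have "diagm u1 e = U1 * (U2' * diagm u2 f * V2') * V1" using E1(5) A2 by simp
    also have "\<dots> = (U1 * U2') * diagm u2 f * (V2' * V1)" by (rule assoc5[OF c(1) c(7) diagm_carrier c(8) c(2)])
    finally show ?thesis .
  qed
  have le1: "sm e m \<le> sm f m" for m
    by (rule sm_le[OF u1 u2 inv_over_mult[OF E2(2) U1'(1)] inv_over_mult[OF V1'(1) E2(3)] D21])
  have le2: "sm f m \<le> sm e m" for m
    by (rule sm_le[OF u2 u1 inv_over_mult[OF E1(2) U2'(1)] inv_over_mult[OF V2'(1) E1(3)] D12])
  have "sm e m = sm f m" for m using le1[of m] le2[of m] by simp
  then show ?thesis by (rule comb_eq[OF E1(1) E2(1)])
qed

end

theorem theorem2p7:
  fixes p n j :: nat and z :: complex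
  assumes "prime p" and "n \<ge> 1"
    and "z ^ (p ^ n) = 1" and "\<forall>k. 0 < k \<and> k < p ^ n \<longrightarrow> z ^ k \<noteq> 1"
    and "j < p ^ n" and "\<not> p dvd j"
  shows "(\<exists>e. elem_div_exps (cyc_ring p n z) (1 - z) ((p - 1) * p ^ (n - 1)) (dedekind_mat p n z) e)
    \<and> (\<forall>e. elem_div_exps (cyc_ring p n z) (1 - z) ((p - 1) * p ^ (n - 1)) (dedekind_mat p n z) e
          \<longrightarrow> int (e (Ncount p j - 1)) =
              - 1 + (\<Sum>s\<le>n. (int (digit p j s) * int (s + 1) - int (digit p j (s + 1)) * int (s + 2)) * int p ^ s))"
proof -
  interpret cyc p n z using assms(1-4) by unfold_locales
  have ex: "elem_div_exps S t r Am E" by (rule existence)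
  have idx: "Ncount p j - 1 < r \<and> UL ! (Ncount p j - 1) = j" by (rule UL_index[OF assms(5,6)])
  have EW: "E (Ncount p j - 1) = Wt p j j" unfolding E_def using idx by simp
  have F: "int (Wt p j j) = - 1 + (\<Sum>s\<le>n. (int (digit p j s) * int (s + 1) - int (digit p j (s + 1)) * int (s + 2)) * int p ^ s)"
    by (rule Wt_formula[OF p_gt1 assms(2,5,6)])
  show ?thesis
  proof (intro conjI allI impI)
    show "\<exists>e. elem_div_exps S t r Am e" using ex by blast
  next
    fix e assume "elem_div_exps S t r Am e"
    then have "\<forall>a<r. e a = E a" using unique_exps ex by blast
    then have "e (Ncount p j - 1) = E (Ncount p j - 1)" using idx by blast
    then show "int (e (Ncount p j - 1)) = - 1 + (\<Sum>s\<le>n. (int (digit p j s) * int (s + 1) - int (digit p j (s + 1)) * int (s + 2)) * int p ^ s)"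
      using EW F by simp
  qed
qed
end
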